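(* Let $\mathcal{T}=(V,A,E,f,q,v_0)$ be a decorated pseudo-rooted tree such that $A\setminus A_0\ne\emptyset$. Then $M(\mathcal{T})=M(\mathcal{T}_{A\setminus A_0})$. In particular, if $|A\setminus A_0|=1$ and $\alpha$ is the unique element of $A\setminus A_0$, then $M(\mathcal{T})=M(\mathcal{T}_\alpha)$.
   Context: A graph is a pair $(X_0,X_1)$ of finite sets such that each element of $X_1$ (an edge) is a $2$-element subset of $X_0$; elements of $X_0$ are cells. The valency $\delta_x$ of a cell is the number of edges containing it. A path is a tuple $(x_0,\dots,x_n)$ ($n\ge0$) of cells with $\{x_i,x_{i+1}\}$ an edge for each $i<n$, these edges pairwise distinct; a cell/edge is in the path if it is some $x_i$ / some $\{x_i,x_{i+1}\}$. The graph is a tree if any two cells $x,y$ are joined by a unique path $\gamma_{x,y}$. A decorated tree is $(V,A,E,f,q)$ with $V$ (vertices), $A$ (arrows) finite disjoint sets, $(V\cup A,E)$ a tree, every arrow of valency $1$, $f:A\to\mathbb{Z}$, $q(e,x)\in\mathbb{Z}$ for each $e\in E$, $x\in e$, with $q(e,\alpha)=1$ for $\alpha\in A$, and for each $v\in V$ and distinct edges $e,e'\ni v$, $\gcd(q(e,v),q(e',v))=1$. $A_0=\{\alpha\in A:f(\alpha)=0\}$. An edge $\varepsilon$ is incident to a path $\gamma$ if it is not in $\gamma$ but contains a cell $u$ of $\gamma$; $q(\varepsilon,\gamma):=q(\varepsilon,u)$. For $v\ne\alpha$, $v\in V\cup A$, $\alpha\in A$: $x_{v,\alpha}=f(\alpha)\prod_\varepsilon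 q(\varepsilon,\gamma_{v,\alpha})$ over edges incident to $\gamma_{v,\alpha}$ (empty product $=1$). For $v\in V\cup A_0$, $N_v=\sum_{\alpha\in A\setminus A_0}x_{v,\alpha}$; $M(\mathcal{T})=-\sum_{v\in V\cup A_0}N_v(\delta_v-2)$. A pseudo-root of $(V,A,E,f,q)$ is a vertex $v_0$ with $q(e,v_0)=1$ for all edges $e\ni v_0$, such that for every $v\in V\setminus\{v_0\}$ at most one edge $e\ni v$ not in $\gamma_{v_0,v}$ has $q(e,v)\ne1$. A decorated pseudo-rooted tree is $(V,A,E,f,q,v_0)$ with $v_0$ a pseudo-root. For nonempty $X\subseteq A\setminus A_0$, $\mathcal{T}_X$: let $\mathcal{T}'_X$ have arrow set $X$, vertices those of $\mathcal{T}$ on some $\gamma_{v_0,\alpha}$ ($\alpha\in X$), edges those of $\mathcal{T}$ in some $\gamma_{v_0,\alpha}$ ($\alpha\in X$), decorations as in $\mathcal{T}$; for each vertex $v$ of $\mathcal{T}'_X$ put $b_v=\prod q(e,v)$ over edges $e$ of $\mathcal{T}$ containing $v$ not in $\mathcal{T}'_X$, and if $b_v\ne1$ add an arrow $\alpha_v$ with $f(\alpha_v)=0$ and edge $\{v,\alpha_v\}$ decorated $b_v$ near $v$, $1$ near $\alpha_v$. The result, pseudo-rooted at $v_0$, is $\mathcal{T}_X$; $\mathcal{T}_\alpha:=\mathcal{T}_{\{\alpha\}}$. *)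

theory Defs
  imports Main "HOL-Computational_Algebra.Primes"
begin

definition is_graph :: "'c set \<Rightarrow> 'c set set \<Rightarrow> bool" where
  "is_graph X0 X1 \<longleftrightarrow> finite X0 \<and> finite X1 \<and> (\<forall>e\<in>X1. e \<subseteq> X0 \<and> card e = 2)"

definition valency :: "'c set set \<Rightarrow> 'c \<Rightarrow> nat" where
  "valency X1 x = card {e\<in>X1. x \<in> e}"

definition path_edge_list :: "'c list \<Rightarrow> 'c set list" where
  "path_edge_list p = map (\<lambda>i. {p ! i, p ! Suc i}) [0..<length p - 1]"

definition path_edges :: "'c list \<Rightarrow> 'c set set" where
  "path_edges p = set (path_edge_list p)"

definition is_path :: "'c set \<Rightarrow> 'c set set \<Rightarrow> 'c list \<Rightarrow> bool" where
  "is_path X0 X1 p \<longleftrightarrow> p \<noteq> [] \<and> set p \<subseteq> X0 \<and> set (path_edge_list p) \<subseteq> X1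
     \<and> distinct (path_edge_list p)"

definition is_tree :: "'c set \<Rightarrow> 'c set set \<Rightarrow> bool" where
  "is_tree X0 X1 \<longleftrightarrow> is_graph X0 X1 \<and>
     (\<forall>x\<in>X0. \<forall>y\<in>X0. \<exists>!p. is_path X0 X1 p \<and> hd p = x \<and> last p = y)"

definition gamma :: "'c set \<Rightarrow> 'c set set \<Rightarrow> 'c \<Rightarrow> 'c \<Rightarrow> 'c list" where
  "gamma X0 X1 x y = (THE p. is_path X0 X1 p \<and> hd p = x \<and> last p = y)"

definition decorated_tree ::
  "'c set \<Rightarrow> 'c set \<Rightarrow> 'c set set \<Rightarrow> ('c \<Rightarrow> int) \<Rightarrow> ('c set \<Rightarrow> 'c \<Rightarrow> int) \<Rightarrow> bool" where
  "decorated_tree V A E f q \<longleftrightarrow> finite V \<and> finite A \<and> V \<inter> A = {} \<and> is_tree (V \<union> A) E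
     \<and> (\<forall>\<alpha>\<in>A. valency E \<alpha> = 1)
     \<and> (\<forall>e\<in>E. \<forall>\<alpha>\<in>A. \<alpha> \<in> e \<longrightarrow> q e \<alpha> = 1)
     \<and> (\<forall>v\<in>V. \<forall>e\<in>E. \<forall>e'\<in>E. e \<noteq> e' \<and> v \<in> e \<and> v \<in> e' \<longrightarrow> gcd (q e v) (q e' v) = 1)"

definition A0 :: "'c set \<Rightarrow> ('c \<Rightarrow> int) \<Rightarrow> 'c set" where
  "A0 A f = {\<alpha>\<in>A. f \<alpha> = 0}"

definition incident_edges :: "'c set set \<Rightarrow> 'c list \<Rightarrow> 'c set set" where
  "incident_edges E p = {\<epsilon>\<in>E. \<epsilon> \<notin> path_edges p \<and> \<epsilon> \<inter> set p \<noteq> {}}"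

definition q_path :: "('c set \<Rightarrow> 'c \<Rightarrow> int) \<Rightarrow> 'c set \<Rightarrow> 'c list \<Rightarrow> int" where
  "q_path q \<epsilon> p = q \<epsilon> (THE u. u \<in> \<epsilon> \<and> u \<in> set p)"

definition xcoef ::
  "'c set \<Rightarrow> 'c set \<Rightarrow> 'c set set \<Rightarrow> ('c \<Rightarrow> int) \<Rightarrow> ('c set \<Rightarrow> 'c \<Rightarrow> int) \<Rightarrow> 'c \<Rightarrow> 'c \<Rightarrow> int" where
  "xcoef V A E f q v \<alpha> =
     f \<alpha> * (\<Prod>\<epsilon>\<in>incident_edges E (gamma (V \<union> A) E v \<alpha>). q_path q \<epsilon> (gamma (V \<union> A) E v \<alpha>))"

definition Ncoef ::
  "'c set \<Rightarrow> 'c set \<Rightarrow> 'c set set \<Rightarrow> ('c \<Rightarrow> int) \<Rightarrow> ('c set \<Rightarrow> 'c \<Rightarrow> int) \<Rightarrow> 'c \<Rightarrow> int" where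
  "Ncoef V A E f q v = (\<Sum>\<alpha>\<in>A - A0 A f. xcoef V A E f q v \<alpha>)"

definition Minv ::
  "'c set \<Rightarrow> 'c set \<Rightarrow> 'c set set \<Rightarrow> ('c \<Rightarrow> int) \<Rightarrow> ('c set \<Rightarrow> 'c \<Rightarrow> int) \<Rightarrow> int" where
  "Minv V A E f q = - (\<Sum>v\<in>V \<union> A0 A f. Ncoef V A E f q v * (int (valency E v) - 2))"

definition pseudo_root ::
  "'c set \<Rightarrow> 'c set \<Rightarrow> 'c set set \<Rightarrow> ('c set \<Rightarrow> 'c \<Rightarrow> int) \<Rightarrow> 'c \<Rightarrow> bool" where
  "pseudo_root V A E q v0 \<longleftrightarrow> v0 \<in> V \<and> (\<forall>e\<in>E. v0 \<in> e \<longrightarrow> q e v0 = 1)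
     \<and> (\<forall>v\<in>V - {v0}. card {e\<in>E. v \<in> e \<and> e \<notin> path_edges (gamma (V \<union> A) E v0 v) \<and> q e v \<noteq> 1} \<le> 1)"

definition decorated_pseudo_rooted_tree ::
  "'c set \<Rightarrow> 'c set \<Rightarrow> 'c set set \<Rightarrow> ('c \<Rightarrow> int) \<Rightarrow> ('c set \<Rightarrow> 'c \<Rightarrow> int) \<Rightarrow> 'c \<Rightarrow> bool" where
  "decorated_pseudo_rooted_tree V A E f q v0 \<longleftrightarrow> decorated_tree V A E f q \<and> pseudo_root V A E q v0"

text \<open>Cells of T_X live in the sum type: Inl x is the old cell x, Inr v is the new arrow alpha_v.\<close>

definition subV :: "'c set \<Rightarrow> 'c set \<Rightarrow> 'c set set \<Rightarrow> 'c \<Rightarrow> 'c set \<Rightarrow> 'c set" where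
  "subV V A E v0 X = {v\<in>V. \<exists>\<alpha>\<in>X. v \<in> set (gamma (V \<union> A) E v0 \<alpha>)}"

definition subE :: "'c set \<Rightarrow> 'c set \<Rightarrow> 'c set set \<Rightarrow> 'c \<Rightarrow> 'c set \<Rightarrow> 'c set set" where
  "subE V A E v0 X = (\<Union>\<alpha>\<in>X. path_edges (gamma (V \<union> A) E v0 \<alpha>))"

definition bval ::
  "'c set \<Rightarrow> 'c set \<Rightarrow> 'c set set \<Rightarrow> ('c set \<Rightarrow> 'c \<Rightarrow> int) \<Rightarrow> 'c \<Rightarrow> 'c set \<Rightarrow> 'c \<Rightarrow> int" where
  "bval V A E q v0 X v = (\<Prod>e\<in>{e\<in>E. v \<in> e \<and> e \<notin> subE V A E v0 X}. q e v)"

definition TX_V :: "'c set \<Rightarrow> 'c set \<Rightarrow> 'c set set \<Rightarrow> 'c \<Rightarrow> 'c set \<Rightarrow> ('c + 'c) set" where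
  "TX_V V A E v0 X = Inl ` subV V A E v0 X"

definition TX_A ::
  "'c set \<Rightarrow> 'c set \<Rightarrow> 'c set set \<Rightarrow> ('c set \<Rightarrow> 'c \<Rightarrow> int) \<Rightarrow> 'c \<Rightarrow> 'c set \<Rightarrow> ('c + 'c) set" where
  "TX_A V A E q v0 X = Inl ` X \<union> Inr ` {v\<in>subV V A E v0 X. bval V A E q v0 X v \<noteq> 1}"

definition TX_E ::
  "'c set \<Rightarrow> 'c set \<Rightarrow> 'c set set \<Rightarrow> ('c set \<Rightarrow> 'c \<Rightarrow> int) \<Rightarrow> 'c \<Rightarrow> 'c set \<Rightarrow> ('c + 'c) set set" where
  "TX_E V A E q v0 X = (\<lambda>e. Inl ` e) ` subE V A E v0 X
     \<union> (\<lambda>v. {Inl v, Inr v}) ` {v\<in>subV V A E v0 X. bval V A E q v0 X v \<noteq> 1}"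

definition TX_f :: "('c \<Rightarrow> int) \<Rightarrow> ('c + 'c) \<Rightarrow> int" where
  "TX_f f c = (case c of Inl x \<Rightarrow> f x | Inr v \<Rightarrow> 0)"

definition TX_q ::
  "'c set \<Rightarrow> 'c set \<Rightarrow> 'c set set \<Rightarrow> ('c set \<Rightarrow> 'c \<Rightarrow> int) \<Rightarrow> 'c \<Rightarrow> 'c set
     \<Rightarrow> ('c + 'c) set \<Rightarrow> ('c + 'c) \<Rightarrow> int" where
  "TX_q V A E q v0 X e c = (case c of
       Inl x \<Rightarrow> (if Inr x \<in> e then bval V A E q v0 X x else q (Inl -` e) x)
     | Inr v \<Rightarrow> 1)"

definition M_sub ::
  "'c set \<Rightarrow> 'c set \<Rightarrow> 'c set set \<Rightarrow> ('c \<Rightarrow> int) \<Rightarrow> ('c set \<Rightarrow> 'c \<Rightarrow> int) \<Rightarrow> 'c \<Rightarrow> 'c set \<Rightarrow> int" where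
  "M_sub V A E f q v0 X = Minv (TX_V V A E v0 X) (TX_A V A E q v0 X) (TX_E V A E q v0 X)
      (TX_f f) (TX_q V A E q v0 X)"

end

theory Submission
  imports Defs
begin

lemma pel_Nil[simp]: "path_edge_list [] = []"
  by (simp add: path_edge_list_def)
lemma pel_single[simp]: "path_edge_list [x] = []"
  by (simp add: path_edge_list_def)
lemma pel_Cons2[simp]: "path_edge_list (x#y#r) = {x,y} # path_edge_list (y#r)"
  unfolding path_edge_list_def
  by (simp add: upt_conv_Cons map_Suc_upt[symmetric] del: upt_Suc)

lemma pel_append: "path_edge_list (xs @ y # ys) = path_edge_list (xs @ [y]) @ path_edge_list (y # ys)"
proof (induction xs)
  case Nil then show ?case by simp
next
  case (Cons a xs) then show ?case by (cases xs) auto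
qed

lemma pel_snoc2: "path_edge_list (xs @ [y, z]) = path_edge_list (xs @ [y]) @ [{y,z}]"
  using pel_append[of xs y "[z]"] by simp

lemma pel_subset: "e \<in> set (path_edge_list p) \<Longrightarrow> e \<subseteq> set p"
proof (induction p rule: induct_list012)
  case (3 x y zs) then show ?case by auto
qed auto

lemma pel_rev: "path_edge_list (rev p) = rev (path_edge_list p)"
proof (induction p rule: induct_list012)
  case (3 x y zs)
  have "path_edge_list (rev (x # y # zs)) = path_edge_list (rev zs @ [y, x])" by simp
  also have "\<dots> = path_edge_list (rev (y#zs)) @ [{y,x}]" by (simp add: pel_snoc2)
  also have "\<dots> = rev (path_edge_list (x#y#zs))" using 3 by (simp add: insert_commute)
  finally show ?case .
qed auto

lemma pel_map: "path_edge_list (map g p) = map (\<lambda>e. g ` e) (path_edge_list p)"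
  by (induction p rule: induct_list012) auto

lemma is_path_single[simp]: "is_path X0 X1 [x] \<longleftrightarrow> x \<in> X0"
  by (simp add: is_path_def)

lemma is_path_Cons2: "is_path X0 X1 (x#y#r) \<longleftrightarrow>
   x \<in> X0 \<and> {x,y} \<in> X1 \<and> {x,y} \<notin> set (path_edge_list (y#r)) \<and> is_path X0 X1 (y#r)"
  by (auto simp: is_path_def)

lemma is_path_append: "is_path X0 X1 (xs @ y # ys) \<Longrightarrow> is_path X0 X1 (xs @ [y]) \<and> is_path X0 X1 (y # ys)"
  unfolding is_path_def using pel_append[of xs y ys] by auto

lemma is_path_rev: "is_path X0 X1 (rev p) \<longleftrightarrow> is_path X0 X1 p"
  unfolding is_path_def by (auto simp: pel_rev)

lemma is_path_interior:
  assumes "is_path X0 X1 (xs @ y # ys)" "xs \<noteq> []" "ys \<noteq> []"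
  shows "{last xs, y} \<in> X1 \<and> {y, hd ys} \<in> X1 \<and> {last xs, y} \<noteq> {y, hd ys}"
proof -
  obtain xs' z where xs: "xs = xs' @ [z]" using assms(2) by (metis rev_exhaust)
  obtain w ys' where ys: "ys = w # ys'" using assms(3) by (cases ys) auto
  have "path_edge_list (xs @ y # ys) = (path_edge_list (xs' @ [z]) @ [{z,y}]) @ ({y,w} # path_edge_list (w#ys'))"
    using pel_append[of xs y ys] by (simp add: xs ys pel_snoc2)
  then show ?thesis using assms(1) unfolding is_path_def by (auto simp: xs ys)
qed

lemma incident_prod:
  fixes E :: "'c set set"
  assumes fin: "finite E" and card2: "\<forall>e\<in>E. card e = 2"
    and nochord: "\<forall>e\<in>E. e \<subseteq> set p \<longrightarrow> e \<in> path_edges p"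
  shows "(\<Prod>\<epsilon>\<in>incident_edges E p. q_path q \<epsilon> p)
       = (\<Prod>y\<in>set p. \<Prod>e\<in>{e\<in>E. y \<in> e \<and> e \<notin> path_edges p}. q e y)"
proof -
  let ?F = "\<lambda>y. {e\<in>E. y \<in> e \<and> e \<notin> path_edges p}"
  have two: "e = {y,u}" if "e \<in> E" "y \<in> e" "u \<in> e" "y \<noteq> u" for e y u
  proof -
    from card2 that(1) obtain a b where "e = {a,b}" "a \<noteq> b" by (meson card_2_iff)
    then show ?thesis using that by blast
  qed
  have inc: "incident_edges E p = (\<Union>y\<in>set p. ?F y)"
    unfolding incident_edges_def by auto
  have disj: "?F y \<inter> ?F u = {}" if "y \<in> set p" "u \<in> set p" "y \<noteq> u" for y u
  proof (rule ccontr)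
    assume "?F y \<inter> ?F u \<noteq> {}"
    then obtain e where e: "e \<in> E" "y \<in> e" "u \<in> e" "e \<notin> path_edges p" by auto
    then have "e = {y,u}" using two that by blast
    then show False using nochord e that by auto
  qed
  have "(\<Prod>\<epsilon>\<in>incident_edges E p. q_path q \<epsilon> p) = (\<Prod>y\<in>set p. \<Prod>e\<in>?F y. q_path q e p)"
    unfolding inc
  proof (rule prod.UNION_disjoint)
    show "\<forall>i\<in>set p. finite (?F i)" using fin by auto
    show "\<forall>i\<in>set p. \<forall>j\<in>set p. i \<noteq> j \<longrightarrow> ?F i \<inter> ?F j = {}" using disj by blast
  qed simp
  also have "\<dots> = (\<Prod>y\<in>set p. \<Prod>e\<in>?F y. q e y)"
  proof (rule prod.cong[OF refl], rule prod.cong[OF refl])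
    fix y e assume y: "y \<in> set p" and e: "e \<in> ?F y"
    have "(THE u. u \<in> e \<and> u \<in> set p) = y"
    proof (rule the_equality)
      fix u assume u: "u \<in> e \<and> u \<in> set p"
      show "u = y"
      proof (rule ccontr)
        assume "u \<noteq> y"
        then have "e = {y,u}" using two e u by blast
        then have "e \<subseteq> set p" using y u by simp
        then have "e \<in> path_edges p" using nochord e by blast
        then show False using e by blast
      qed
    qed (use y e in auto)
    then show "q_path q e p = q e y" by (simp add: q_path_def)
  qed
  finally show ?thesis .
qed


locale tree =
  fixes X0 :: "'c set" and X1 :: "'c set set"
  assumes tr: "is_tree X0 X1"
begin

abbreviation g where "g \<equiv> gamma X0 X1"

lemma finX0: "finite X0" and finX1: "finite X1"
  and edge_sub: "e \<in> X1 \<Longrightarrow> e \<subseteq> X0" and edge_card: "e \<in> X1 \<Longrightarrow> card e = 2"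
  using tr unfolding is_tree_def is_graph_def by auto

lemma edge_neq: "{a,b} \<in> X1 \<Longrightarrow> a \<noteq> b"
  using edge_card by fastforce

lemma edge_two: "e \<in> X1 \<Longrightarrow> y \<in> e \<Longrightarrow> u \<in> e \<Longrightarrow> y \<noteq> u \<Longrightarrow> e = {y,u}"
proof -
  assume "e \<in> X1" "y \<in> e" "u \<in> e" "y \<noteq> u"
  from edge_card[OF \<open>e \<in> X1\<close>] obtain a b where "e = {a,b}" "a \<noteq> b" by (meson card_2_iff)
  then show "e = {y,u}" using \<open>y \<in> e\<close> \<open>u \<in> e\<close> \<open>y \<noteq> u\<close> by blast
qed

lemma path_in: "is_path X0 X1 p \<Longrightarrow> p \<noteq> [] \<and> set p \<subseteq> X0"
  by (simp add: is_path_def)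

lemma gamma_ex1: "x \<in> X0 \<Longrightarrow> y \<in> X0 \<Longrightarrow> \<exists>!p. is_path X0 X1 p \<and> hd p = x \<and> last p = y"
  using tr unfolding is_tree_def by blast

lemma gamma: "x \<in> X0 \<Longrightarrow> y \<in> X0 \<Longrightarrow> is_path X0 X1 (g x y) \<and> hd (g x y) = x \<and> last (g x y) = y"
  unfolding gamma_def by (rule theI'[OF gamma_ex1])

lemma gamma_uniq: "is_path X0 X1 p \<Longrightarrow> hd p = x \<Longrightarrow> last p = y \<Longrightarrow> g x y = p"
proof -
  assume p: "is_path X0 X1 p" "hd p = x" "last p = y"
  then have "x \<in> X0" "y \<in> X0" using path_in[OF p(1)] by auto
  then show ?thesis unfolding gamma_def using p by (intro the1_equality[OF gamma_ex1]) auto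
qed

lemma gamma_ne: "x \<in> X0 \<Longrightarrow> y \<in> X0 \<Longrightarrow> g x y \<noteq> []"
  using gamma path_in by blast

lemma gamma_set: "x \<in> X0 \<Longrightarrow> y \<in> X0 \<Longrightarrow> set (g x y) \<subseteq> X0"
  using gamma path_in by blast

lemma gamma_edges: "x \<in> X0 \<Longrightarrow> y \<in> X0 \<Longrightarrow> set (path_edge_list (g x y)) \<subseteq> X1"
  using gamma unfolding is_path_def by blast

lemma gamma_refl: "x \<in> X0 \<Longrightarrow> g x x = [x]"
  by (rule gamma_uniq) auto

lemma gamma_rev: "x \<in> X0 \<Longrightarrow> y \<in> X0 \<Longrightarrow> g y x = rev (g x y)"
  using gamma[of x y] gamma_ne[of x y]
  by (intro gamma_uniq) (auto simp: is_path_rev hd_rev last_rev)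

lemma gamma_distinct: "x \<in> X0 \<Longrightarrow> y \<in> X0 \<Longrightarrow> distinct (g x y)"
proof (rule ccontr)
  assume xy: "x \<in> X0" "y \<in> X0" and nd: "\<not> distinct (g x y)"
  let ?p = "g x y"
  from nd obtain xs z ys zs where p: "?p = xs @ [z] @ ys @ [z] @ zs"
    using not_distinct_decomp by blast
  let ?p' = "xs @ z # zs"
  have pp: "is_path X0 X1 ?p" "hd ?p = x" "last ?p = y" using gamma[OF xy] by auto
  have e1: "path_edge_list (xs @ z # ys @ z # zs) = path_edge_list (xs @ [z]) @ (path_edge_list (z # ys @ [z]) @ path_edge_list (z # zs))"
    using pel_append[of xs z "ys @ z # zs"] pel_append[of "z#ys" z zs] by simp
  have e2: "path_edge_list ?p' = path_edge_list (xs @ [z]) @ path_edge_list (z # zs)"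
    using pel_append by metis
  have pp1: "is_path X0 X1 (xs @ z # ys @ z # zs)" using pp(1) p by simp
  have "is_path X0 X1 ?p'"
    using pp1 unfolding is_path_def e1 e2 by auto
  moreover have "hd ?p' = x" using pp(2) unfolding p by (cases xs) auto
  moreover have "last ?p' = y" using pp(3) unfolding p by (cases zs) auto
  ultimately have "?p = ?p'" using gamma_uniq by blast
  then show False unfolding p by simp
qed

lemma gamma_suffix: "x \<in> X0 \<Longrightarrow> y \<in> X0 \<Longrightarrow> g x y = l1 @ a # l2 \<Longrightarrow> g a y = a # l2"
proof -
  assume xy: "x \<in> X0" "y \<in> X0" and p: "g x y = l1 @ a # l2"
  have "is_path X0 X1 (a # l2)" using gamma[OF xy] p is_path_append by metis
  moreover have "last (a # l2) = y" using gamma[OF xy] p by (metis last_appendR list.simps(3))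
  ultimately show ?thesis using gamma_uniq by simp
qed

lemma gamma_prefix: "x \<in> X0 \<Longrightarrow> y \<in> X0 \<Longrightarrow> g x y = l1 @ a # l2 \<Longrightarrow> g x a = l1 @ [a]"
proof -
  assume xy: "x \<in> X0" "y \<in> X0" and p: "g x y = l1 @ a # l2"
  have "is_path X0 X1 (l1 @ [a])" using gamma[OF xy] p is_path_append by metis
  moreover have "hd (l1 @ [a]) = x" using gamma[OF xy] p by (cases l1) auto
  ultimately show ?thesis using gamma_uniq by simp
qed

lemma F2b:
  assumes cd: "{c,d} \<in> X1" and y: "y \<in> X0" and c: "c \<in> set (g d y)"
  shows "g d y = d # g c y"
proof -
  have d0: "d \<in> X0" and c0: "c \<in> X0" using edge_sub[OF cd] by auto
  have neq: "c \<noteq> d" using edge_neq[OF cd] .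
  obtain l1 l2 where p: "g d y = l1 @ c # l2" using c split_list by metis
  have suf: "g c y = c # l2" using gamma_suffix[OF d0 y p] .
  have hd1: "hd (l1 @ c # l2) = d" using gamma[OF d0 y] p by simp
  have "l1 \<noteq> []"
  proof
    assume "l1 = []" then show False using hd1 neq by simp
  qed
  then have l1: "l1 = d # tl l1" using hd1 by (metis hd_append2 list.collapse)
  have "g d y = d # (tl l1 @ c # l2)" using p l1 by (metis append_Cons)
  then have "distinct (d # tl l1 @ c # l2)" using gamma_distinct[OF d0 y] by simp
  then have "d \<notin> set (c # l2)" by simp
  then have nin: "{d,c} \<notin> set (path_edge_list (c # l2))"
    using pel_subset[of "{d,c}" "c # l2"] by blast
  have pc: "is_path X0 X1 (c # l2)" "last (c # l2) = y" using gamma[OF c0 y] suf by auto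
  have "is_path X0 X1 (d # c # l2)"
    unfolding is_path_Cons2 using pc nin d0 cd by (simp add: insert_commute)
  then have "g d y = d # c # l2" using gamma_uniq pc(2) by simp
  then show ?thesis using suf by simp
qed

lemma F2a:
  assumes cd: "{c,d} \<in> X1" and y: "y \<in> X0" and c: "c \<notin> set (g d y)"
  shows "g c y = c # g d y"
proof -
  have d0: "d \<in> X0" and c0: "c \<in> X0" using edge_sub[OF cd] by auto
  have hdd: "hd (g d y) = d" using gamma[OF d0 y] by simp
  obtain r where p: "g d y = d # r" using gamma_ne[OF d0 y] hdd by (metis list.collapse)
  have nin: "{c,d} \<notin> set (path_edge_list (d # r))"
  proof
    assume "{c,d} \<in> set (path_edge_list (d # r))"
    then have "{c,d} \<subseteq> set (d # r)" by (rule pel_subset)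
    then show False using c p by simp
  qed
  have pd: "is_path X0 X1 (d # r)" "last (d # r) = y" using gamma[OF d0 y] p by auto
  have "is_path X0 X1 (c # d # r)"
    unfolding is_path_Cons2 using pd nin c0 cd by simp
  then have "g c y = c # d # r" using gamma_uniq pd(2) by simp
  then show ?thesis using p by simp
qed

lemma walk:
  assumes "w \<noteq> []" "set w \<subseteq> X0" "set (path_edge_list w) \<subseteq> X1" "z \<in> X0"
  shows "set (g (hd w) z) \<subseteq> set w \<union> set (g (last w) z)
    \<and> set (path_edge_list (g (hd w) z)) \<subseteq> set (path_edge_list w) \<union> set (path_edge_list (g (last w) z))"
  using assms
proof (induction w)
  case Nil then show ?case by simp
next
  case (Cons a w)
  show ?case
  proof (cases w)
    case Nil then show ?thesis by auto
  next
    case (Cons b w')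
    have ab: "{a,b} \<in> X1" using Cons.prems Cons by simp
    have IH: "set (g b z) \<subseteq> set w \<union> set (g (last w) z)
      \<and> set (path_edge_list (g b z)) \<subseteq> set (path_edge_list w) \<union> set (path_edge_list (g (last w) z))"
      using Cons.IH Cons.prems Cons by auto
    have lw: "last (a # w) = last w" using Cons by simp
    have pw: "set (path_edge_list (a # w)) = insert {a,b} (set (path_edge_list w))" using Cons by simp
    show ?thesis
    proof (cases "a \<in> set (g b z)")
      case True
      then have e: "g b z = b # g a z" using F2b[OF ab Cons.prems(4)] by simp
      obtain r where r: "g a z = a # r" using gamma[of a z] gamma_ne[of a z] edge_sub[OF ab] Cons.prems(4)
        by (cases "g a z") auto
      have "set (g a z) \<subseteq> set (g b z)" using e by auto
      moreover have "set (path_edge_list (g a z)) \<subseteq> set (path_edge_list (g b z))" using e r by auto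
      ultimately show ?thesis using IH lw pw by auto
    next
      case False
      then have e: "g a z = a # g b z" using F2a[OF ab Cons.prems(4)] by simp
      obtain r where r: "g b z = b # r" using gamma[of b z] gamma_ne[of b z] edge_sub[OF ab] Cons.prems(4)
        by (cases "g b z") auto
      have "set (path_edge_list (g a z)) = insert {a,b} (set (path_edge_list (g b z)))" using e r by simp
      then show ?thesis using IH lw pw e Cons by auto
    qed
  qed
qed

lemma triangle:
  assumes "x \<in> X0" "y \<in> X0" "z \<in> X0"
  shows "set (g x z) \<subseteq> set (g x y) \<union> set (g y z)
    \<and> set (path_edge_list (g x z)) \<subseteq> set (path_edge_list (g x y)) \<union> set (path_edge_list (g y z))"
  using walk[of "g x y" z] gamma[OF assms(1,2)] gamma_ne[OF assms(1,2)] gamma_set[OF assms(1,2)]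
    gamma_edges[OF assms(1,2)] assms(3) by auto

lemma nochord_aux:
  assumes xy: "x \<in> X0" "y \<in> X0" and p: "g x y = l1 @ a # l2" and b: "b \<in> set l2" and ab: "{a,b} \<in> X1"
  shows "{a,b} \<in> set (path_edge_list (g x y))"
proof -
  have suf: "g a y = a # l2" using gamma_suffix[OF xy p] .
  have "b \<in> set (g a y)" using suf b by simp
  then have "g a y = a # g b y" using F2b[of b a y] ab xy by (simp add: insert_commute)
  then have l2: "l2 = g b y" using suf by simp
  have b0: "b \<in> X0" using edge_sub[OF ab] by auto
  obtain r where "g b y = b # r" using gamma[OF b0 xy(2)] gamma_ne[OF b0 xy(2)] by (cases "g b y") auto
  then have "{a,b} \<in> set (path_edge_list (a # l2))" using l2 by simp
  then show ?thesis using p pel_append[of l1 a l2] by simp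
qed

lemma nochord:
  assumes xy: "x \<in> X0" "y \<in> X0" and e: "e \<in> X1" "e \<subseteq> set (g x y)"
  shows "e \<in> set (path_edge_list (g x y))"
proof -
  from edge_card[OF e(1)] obtain a b where ab: "e = {a,b}" "a \<noteq> b" by (meson card_2_iff)
  have a: "a \<in> set (g x y)" and b: "b \<in> set (g x y)" using e ab by auto
  obtain l1 l2 where p: "g x y = l1 @ a # l2" using a split_list by metis
  then have "b \<in> set l1 \<or> b \<in> set l2" using b ab by auto
  then show ?thesis
  proof
    assume "b \<in> set l2" then show ?thesis using nochord_aux[OF xy p] e ab by simp
  next
    assume "b \<in> set l1"
    then obtain m1 m2 where "l1 = m1 @ b # m2" using split_list by metis
    then have p2: "g x y = m1 @ b # (m2 @ a # l2)" using p by simp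
    show ?thesis using nochord_aux[OF xy p2, of a] e ab by (simp add: insert_commute)
  qed
qed

lemma arrow_end:
  assumes p: "is_path X0 X1 p" and a: "a \<in> set p" and v: "valency X1 a = 1"
  shows "a = hd p \<or> a = last p"
proof (rule ccontr)
  assume "\<not> (a = hd p \<or> a = last p)"
  then have n: "a \<noteq> hd p" "a \<noteq> last p" by auto
  obtain l1 l2 where s: "p = l1 @ a # l2" using a split_list by metis
  have "l1 \<noteq> []" using n s by auto
  moreover have "l2 \<noteq> []" using n s by auto
  ultimately have i: "{last l1, a} \<in> X1 \<and> {a, hd l2} \<in> X1 \<and> {last l1, a} \<noteq> {a, hd l2}"
    using is_path_interior p s by metis
  have "{{last l1, a}, {a, hd l2}} \<subseteq> {e\<in>X1. a \<in> e}" using i by auto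
  then have "card {{last l1, a}, {a, hd l2}} \<le> card {e\<in>X1. a \<in> e}"
    using finX1 by (intro card_mono) auto
  then show False using i v unfolding valency_def by simp
qed

end


locale dpr =
  fixes V A :: "'c set" and E :: "'c set set" and f :: "'c \<Rightarrow> int"
    and q :: "'c set \<Rightarrow> 'c \<Rightarrow> int" and v0 :: 'c
  assumes dprt: "decorated_pseudo_rooted_tree V A E f q v0"
    and Xne: "A - A0 A f \<noteq> {}"
begin

lemma dt: "decorated_tree V A E f q" and pr: "pseudo_root V A E q v0"
  using dprt unfolding decorated_pseudo_rooted_tree_def by auto

lemma finV: "finite V" and finA: "finite A" and VA: "V \<inter> A = {}" and istree: "is_tree (V \<union> A) E"
  and arrow_val: "\<alpha> \<in> A \<Longrightarrow> valency E \<alpha> = 1"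
  using dt unfolding decorated_tree_def by auto

lemma v0V: "v0 \<in> V" and qv0: "e \<in> E \<Longrightarrow> v0 \<in> e \<Longrightarrow> q e v0 = 1"
  and prc: "v \<in> V \<Longrightarrow> v \<noteq> v0 \<Longrightarrow> card {e\<in>E. v \<in> e \<and> e \<notin> path_edges (gamma (V \<union> A) E v0 v) \<and> q e v \<noteq> 1} \<le> 1"
  using pr unfolding pseudo_root_def by auto

sublocale tree "V \<union> A" E
  by unfold_locales (rule istree)

abbreviation "X \<equiv> A - A0 A f"
abbreviation "S \<equiv> subV V A E v0 X"
abbreviation "SE \<equiv> subE V A E v0 X"
abbreviation "Ch \<equiv> (V \<union> A) - (S \<union> X)"

lemma XA: "X \<subseteq> A" by auto
lemma Xf: "\<alpha> \<in> X \<Longrightarrow> f \<alpha> \<noteq> 0" by (auto simp: A0_def)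
lemma SV: "S \<subseteq> V" by (auto simp: subV_def)
lemma finS: "finite S" using SV finV finite_subset by blast
lemma finX: "finite X" using finA by auto
lemma SX_cells: "S \<union> X \<subseteq> V \<union> A" using SV by auto
lemma v0_cell: "v0 \<in> V \<union> A" using v0V by auto

lemma root_path:
  assumes b: "\<beta> \<in> X"
  shows "set (g v0 \<beta>) \<subseteq> S \<union> X \<and> set (path_edge_list (g v0 \<beta>)) \<subseteq> SE"
proof
  have b0: "\<beta> \<in> V \<union> A" using b by auto
  show "set (g v0 \<beta>) \<subseteq> S \<union> X"
  proof
    fix y assume y: "y \<in> set (g v0 \<beta>)"
    have yc: "y \<in> V \<union> A" using gamma_set[OF v0_cell b0] y by blast
    show "y \<in> S \<union> X"
    proof (cases "y \<in> V")
      case True then show ?thesis using y b unfolding subV_def by blast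
    next
      case False
      then have "y \<in> A" using yc by blast
      then have "y = hd (g v0 \<beta>) \<or> y = last (g v0 \<beta>)"
        using arrow_end[OF _ y] gamma[OF v0_cell b0] arrow_val by blast
      then have "y = v0 \<or> y = \<beta>" using gamma[OF v0_cell b0] by simp
      then show ?thesis using False v0V b by blast
    qed
  qed
  show "set (path_edge_list (g v0 \<beta>)) \<subseteq> SE" using b unfolding subE_def path_edges_def by blast
qed

lemma v0S: "v0 \<in> S"
proof -
  obtain \<beta> where b: "\<beta> \<in> X" using Xne by blast
  have "v0 \<in> set (g v0 \<beta>)" using gamma[OF v0_cell, of \<beta>] gamma_ne[OF v0_cell, of \<beta>] b
    by (metis DiffD1 UnI2 list.set_sel(1))
  then show ?thesis using b v0V unfolding subV_def by blast
qed

lemma prefix_path: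
  assumes a: "a \<in> S \<union> X"
  shows "set (g v0 a) \<subseteq> S \<union> X \<and> set (path_edge_list (g v0 a)) \<subseteq> SE"
proof (cases "a \<in> X")
  case True then show ?thesis using root_path by blast
next
  case False
  then have "a \<in> S" using a by blast
  then obtain \<beta> where b: "\<beta> \<in> X" and ab: "a \<in> set (g v0 \<beta>)" unfolding subV_def by blast
  have b0: "\<beta> \<in> V \<union> A" using b by auto
  obtain l1 l2 where sp: "g v0 \<beta> = l1 @ a # l2" using ab split_list by metis
  have pre: "g v0 a = l1 @ [a]" using gamma_prefix[OF v0_cell b0 sp] .
  have "set (g v0 a) \<subseteq> set (g v0 \<beta>)" using pre sp by auto
  moreover have "set (path_edge_list (g v0 a)) \<subseteq> set (path_edge_list (g v0 \<beta>))"
    using pre sp pel_append[of l1 a l2] by simp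
  ultimately show ?thesis using root_path[OF b] by blast
qed

lemma prefix_path_rev:
  assumes a: "a \<in> S \<union> X"
  shows "set (g a v0) \<subseteq> S \<union> X \<and> set (path_edge_list (g a v0)) \<subseteq> SE"
proof -
  have a0: "a \<in> V \<union> A" using a SX_cells by blast
  show ?thesis using prefix_path[OF a] gamma_rev[OF v0_cell a0] by (simp add: pel_rev)
qed

lemma convex:
  assumes a: "a \<in> S \<union> X" and b: "b \<in> S \<union> X"
  shows "set (g a b) \<subseteq> S \<union> X \<and> set (path_edge_list (g a b)) \<subseteq> SE"
proof -
  have a0: "a \<in> V \<union> A" and b0: "b \<in> V \<union> A" using a b SX_cells by auto
  show ?thesis using triangle[OF a0 v0_cell b0] prefix_path[OF b] prefix_path_rev[OF a] by blast
qed

lemma SE_E: "SE \<subseteq> E"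
  unfolding subE_def path_edges_def using gamma_edges v0_cell by auto

lemma SE_cells: "e \<in> SE \<Longrightarrow> e \<subseteq> S \<union> X"
proof -
  assume "e \<in> SE"
  then obtain \<beta> where b: "\<beta> \<in> X" and e: "e \<in> set (path_edge_list (g v0 \<beta>))"
    unfolding subE_def path_edges_def by blast
  have "e \<subseteq> set (g v0 \<beta>)" using pel_subset[OF e] .
  then show ?thesis using root_path[OF b] by blast
qed

lemma SE_intro:
  assumes e: "e \<in> E" "e \<subseteq> S \<union> X" shows "e \<in> SE"
proof -
  from edge_card[OF e(1)] obtain a b where ab: "e = {a,b}" "a \<noteq> b" by (meson card_2_iff)
  have a: "a \<in> S \<union> X" and b: "b \<in> S \<union> X" using e ab by auto
  have a0: "a \<in> V \<union> A" and b0: "b \<in> V \<union> A" using a b SX_cells by auto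
  have "is_path (V \<union> A) E [a,b]" using is_path_Cons2[of "V \<union> A" E a b "[]"] a0 b0 e ab by simp
  then have "g a b = [a,b]" using gamma_uniq by simp
  then show ?thesis using convex[OF a b] ab by simp
qed

lemma arrow_edges:
  assumes a: "\<alpha> \<in> A" and e: "e \<in> E" "\<alpha> \<in> e" and e': "e' \<in> E" "\<alpha> \<in> e'"
  shows "e = e'"
proof -
  have "valency E \<alpha> = 1" using arrow_val[OF a] .
  then have c: "card {e\<in>E. \<alpha> \<in> e} = 1" unfolding valency_def .
  obtain z where z: "{e\<in>E. \<alpha> \<in> e} = {z}" using card_1_singletonE[OF c] .
  have "e \<in> {z}" "e' \<in> {z}" using e e' z[symmetric] by auto
  then show "e = e'" by simp
qed

lemma X_edges_SE:
  assumes a: "\<alpha> \<in> X" and e: "e \<in> E" "\<alpha> \<in> e" shows "e \<in> SE"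
proof -
  have a0: "\<alpha> \<in> V \<union> A" using a by auto
  have "\<alpha> \<noteq> v0" using a v0V VA by auto
  have gp: "g v0 \<alpha> \<noteq> []" "hd (g v0 \<alpha>) = v0" "last (g v0 \<alpha>) = \<alpha>"
    using gamma[OF v0_cell a0] gamma_ne[OF v0_cell a0] by auto
  define l where "l = butlast (g v0 \<alpha>)"
  have l1: "g v0 \<alpha> = l @ [\<alpha>]" using gp unfolding l_def by (metis append_butlast_last_id)
  have l2: "l \<noteq> []"
  proof
    assume "l = []" then have "g v0 \<alpha> = [\<alpha>]" using l1 by simp
    then show False using gp \<open>\<alpha> \<noteq> v0\<close> by simp
  qed
  note l = l1 l2
  obtain l' z where l': "l = l' @ [z]" using l(2) by (metis rev_exhaust)
  have "{z, \<alpha>} \<in> set (path_edge_list (g v0 \<alpha>))" using l l' pel_snoc2[of l' z \<alpha>] by simp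
  then have zs: "{z, \<alpha>} \<in> SE" using root_path[OF a] by blast
  then have "{z, \<alpha>} \<in> E" using SE_E by blast
  moreover have "\<alpha> \<in> A" using a by simp
  ultimately have "e = {z, \<alpha>}" using arrow_edges[of \<alpha> e "{z,\<alpha>}"] e by blast
  then show ?thesis using zs by simp
qed

end


context dpr begin

definition par where "par c = g c v0 ! 1"
definition Hs where "Hs y = {e\<in>E. y \<in> e \<and> e \<notin> SE}"
definition Ec where "Ec c = {e\<in>E. c \<in> e}"

lemma Ch_cell: "c \<in> Ch \<Longrightarrow> c \<in> V \<union> A" by blast
lemma Ch_ne_v0: "c \<in> Ch \<Longrightarrow> c \<noteq> v0" using v0S by blast

lemma par_path:
  assumes c: "c \<in> Ch"
  shows "g c v0 = c # g (par c) v0 \<and> {c, par c} \<in> E \<and> par c \<in> V \<union> A \<and> c \<notin> set (g (par c) v0)"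
proof -
  have c0: "c \<in> V \<union> A" using c by blast
  have gp: "g c v0 \<noteq> []" "hd (g c v0) = c" "last (g c v0) = v0" "is_path (V \<union> A) E (g c v0)"
    using gamma[OF c0 v0_cell] gamma_ne[OF c0 v0_cell] by auto
  define r where "r = tl (g c v0)"
  have cr: "g c v0 = c # r" using gp unfolding r_def by (metis list.collapse)
  have "r \<noteq> []"
  proof
    assume "r = []" then have "last (g c v0) = c" using cr by simp
    then show False using gp Ch_ne_v0[OF c] by simp
  qed
  then have r: "r = hd r # tl r" by simp
  have pc: "par c = hd r" unfolding par_def using cr r by (metis nth_Cons_0 nth_Cons_Suc One_nat_def)
  have suf: "g (hd r) v0 = hd r # tl r" using gamma_suffix[OF c0 v0_cell, of "[c]" "hd r" "tl r"] cr r by simp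
  have "is_path (V \<union> A) E (c # hd r # tl r)" using gp(4) cr r by simp
  then have e1: "{c, hd r} \<in> E" and pr: "is_path (V \<union> A) E (hd r # tl r)" unfolding is_path_Cons2 by auto
  have "set (hd r # tl r) \<subseteq> V \<union> A" using path_in[OF pr] by blast
  then have e2: "hd r \<in> V \<union> A" by simp
  note e = e1 e2
  have "distinct (c # r)" using gamma_distinct[OF c0 v0_cell] cr by simp
  then show ?thesis using cr suf e pc r by (metis distinct.simps(2))
qed

lemma par_V:
  assumes c: "c \<in> Ch" shows "par c \<in> V"
proof (rule ccontr)
  assume n: "par c \<notin> V"
  have c0: "c \<in> V \<union> A" using c by blast
  have pp: "g c v0 = c # g (par c) v0" "par c \<in> V \<union> A" "c \<notin> set (g (par c) v0)" using par_path[OF c] by auto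
  then have pA: "par c \<in> A" using n by blast
  have p0: "par c \<in> V \<union> A" using pp by blast
  have "par c \<in> set (g (par c) v0)" using gamma[OF p0 v0_cell] gamma_ne[OF p0 v0_cell] by (metis list.set_sel(1))
  then have ps: "par c \<in> set (g c v0)" using pp by simp
  have "par c = hd (g c v0) \<or> par c = last (g c v0)"
    using arrow_end[OF _ ps] gamma[OF c0 v0_cell] arrow_val[OF pA] by blast
  moreover have "par c \<noteq> c" using pp \<open>par c \<in> set (g (par c) v0)\<close> by auto
  ultimately have "par c = v0" using gamma[OF c0 v0_cell] by simp
  then show False using n v0V by simp
qed

lemma par_alpha:
  assumes c: "c \<in> Ch" and a: "\<alpha> \<in> X"
  shows "g c \<alpha> = c # g (par c) \<alpha>"
proof -
  have pp: "g c v0 = c # g (par c) v0" "{c, par c} \<in> E" "par c \<in> V \<union> A" "c \<notin> set (g (par c) v0)"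
    using par_path[OF c] by auto
  have a0: "\<alpha> \<in> V \<union> A" using a by blast
  have "set (g (par c) \<alpha>) \<subseteq> set (g (par c) v0) \<union> set (g v0 \<alpha>)"
    using triangle[OF pp(3) v0_cell a0] by blast
  moreover have "c \<notin> set (g v0 \<alpha>)" using root_path[OF a] c by blast
  ultimately have "c \<notin> set (g (par c) \<alpha>)" using pp(4) by blast
  then show ?thesis using F2a[OF pp(2) a0] by simp
qed

lemma g_v0_SX: "a \<in> S \<union> X \<Longrightarrow> set (g a v0) \<subseteq> S \<union> X"
  using prefix_path_rev by blast

lemma par_child:
  assumes c: "c \<in> Ch" and cd: "{c,d} \<in> E" and dp: "d \<noteq> par c"
  shows "d \<in> Ch \<and> par d = c"
proof -
  have d0: "d \<in> V \<union> A" using edge_sub[OF cd] by blast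
  have c0: "c \<in> V \<union> A" using c by blast
  have dc: "{d,c} \<in> E" using cd by (simp add: insert_commute)
  have dCh: "d \<in> Ch"
  proof (rule ccontr)
    assume "d \<notin> Ch"
    then have dS: "d \<in> S \<union> X" using d0 by blast
    then have "c \<notin> set (g d v0)" using g_v0_SX[OF dS] c by blast
    then have "g c v0 = c # g d v0" using F2a[OF cd v0_cell] by simp
    then have "g d v0 = g (par c) v0" using par_path[OF c] by simp
    then have "d = par c" using gamma[OF d0 v0_cell] gamma[OF _ v0_cell, of "par c"] par_path[OF c] by metis
    then show False using dp by simp
  qed
  have "par d = c"
  proof (cases "d \<in> set (g c v0)")
    case True
    have "g c v0 = c # g d v0" using F2b[OF dc v0_cell True] .
    then have "g d v0 = g (par c) v0" using par_path[OF c] by simp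
    then have "d = par c" using gamma[OF d0 v0_cell] gamma[OF _ v0_cell, of "par c"] par_path[OF c] by metis
    then show ?thesis using dp by simp
  next
    case False
    then have e: "g d v0 = d # g c v0" using F2a[OF dc v0_cell] by simp
    have "g d v0 = d # g (par d) v0" using par_path[OF dCh] by simp
    then have "g (par d) v0 = g c v0" using e by simp
    then show ?thesis using gamma[OF c0 v0_cell] gamma[OF _ v0_cell, of "par d"] par_path[OF dCh] by metis
  qed
  then show ?thesis using dCh by simp
qed

lemma par_ne:
  assumes d: "d \<in> Ch" and c: "par d \<in> Ch" shows "par (par d) \<noteq> d"
proof
  assume eq: "par (par d) = d"
  have "g (par d) v0 = par d # g d v0" using par_path[OF c] eq by simp
  moreover have "g d v0 = d # g (par d) v0" using par_path[OF d] by simp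
  ultimately have "length (g d v0) = length (g d v0) + 2" by simp
  then show False by simp
qed

lemma child_edge: "d \<in> Ch \<Longrightarrow> par d = c \<Longrightarrow> {c,d} \<in> E \<and> c \<noteq> d"
proof -
  assume d: "d \<in> Ch" and p: "par d = c"
  have "{d, par d} \<in> E" using par_path[OF d] by blast
  then have "{c,d} \<in> E" using p by (simp add: insert_commute)
  then show ?thesis using edge_neq by blast
qed

lemma doubleton_inj: "c \<noteq> d \<Longrightarrow> c \<noteq> d' \<Longrightarrow> ({c,d} = {c,d'}) = (d = d')"
  by (auto simp: doubleton_eq_iff)

lemma bij_ch:
  assumes c: "c \<in> Ch"
  shows "bij_betw (\<lambda>d. {c,d}) {d\<in>Ch. par d = c} (Ec c - {{c, par c}})"
proof (rule bij_betwI')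
  fix d d' assume d: "d \<in> {d\<in>Ch. par d = c}" and d': "d' \<in> {d\<in>Ch. par d = c}"
  have "c \<noteq> d" using child_edge d by blast
  moreover have "c \<noteq> d'" using child_edge d' by blast
  ultimately show "({c,d} = {c,d'}) = (d = d')" by (rule doubleton_inj)
next
  fix d assume d: "d \<in> {d\<in>Ch. par d = c}"
  then have dd: "d \<in> Ch" "par d = c" by auto
  have e: "{c,d} \<in> E" "c \<noteq> d" using child_edge[OF dd] by auto
  have "par c \<noteq> d" using par_ne[OF dd(1)] dd c by simp
  then have "{c,d} \<noteq> {c, par c}" using e(2) by (auto simp: doubleton_eq_iff)
  then show "{c,d} \<in> Ec c - {{c, par c}}" unfolding Ec_def using e by simp
next
  fix e assume e: "e \<in> Ec c - {{c, par c}}"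
  then have eE: "e \<in> E" "c \<in> e" "e \<noteq> {c, par c}" unfolding Ec_def by auto
  from edge_card[OF eE(1)] obtain a b where ab: "e = {a,b}" "a \<noteq> b" by (meson card_2_iff)
  obtain d where ed: "e = {c,d}" using ab eE(2) by blast
  have "d \<noteq> par c" using eE(3) ed by blast
  then have "d \<in> Ch \<and> par d = c" using par_child[OF c] eE(1) ed by blast
  then show "\<exists>d\<in>{d\<in>Ch. par d = c}. e = {c,d}" using ed by blast
qed

lemma bij_S:
  assumes w: "w \<in> S"
  shows "bij_betw (\<lambda>d. {w,d}) {d\<in>Ch. par d = w} (Hs w)"
proof (rule bij_betwI')
  fix d d' assume d: "d \<in> {d\<in>Ch. par d = w}" and d': "d' \<in> {d\<in>Ch. par d = w}"
  have "w \<noteq> d" using child_edge d by blast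
  moreover have "w \<noteq> d'" using child_edge d' by blast
  ultimately show "({w,d} = {w,d'}) = (d = d')" by (rule doubleton_inj)
next
  fix d assume d: "d \<in> {d\<in>Ch. par d = w}"
  then have dd: "d \<in> Ch" "par d = w" by auto
  have e: "{w,d} \<in> E" using child_edge[OF dd] by auto
  have "\<not> {w,d} \<subseteq> S \<union> X" using dd(1) by blast
  then have "{w,d} \<notin> SE" using SE_cells by blast
  then show "{w,d} \<in> Hs w" unfolding Hs_def using e by simp
next
  fix e assume e: "e \<in> Hs w"
  then have eE: "e \<in> E" "w \<in> e" "e \<notin> SE" unfolding Hs_def by auto
  from edge_card[OF eE(1)] obtain a b where ab: "e = {a,b}" "a \<noteq> b" by (meson card_2_iff)
  obtain d where ed: "e = {w,d}" using ab eE(2) by blast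
  have d0: "d \<in> V \<union> A" using edge_sub[OF eE(1)] ed by blast
  have w0: "w \<in> S \<union> X" using w by blast
  have dCh: "d \<in> Ch"
  proof (rule ccontr)
    assume "d \<notin> Ch"
    then have "d \<in> S \<union> X" using d0 by blast
    then have "e \<subseteq> S \<union> X" using ed w0 by blast
    then have "e \<in> SE" using SE_intro[OF eE(1)] by blast
    then show False using eE by simp
  qed
  have dn: "d \<notin> set (g w v0)" using g_v0_SX[OF w0] dCh by blast
  have dw: "{d,w} \<in> E" using eE(1) ed by (simp add: insert_commute)
  have "g d v0 = d # g w v0" using F2a[OF dw v0_cell dn] .
  moreover have "g d v0 = d # g (par d) v0" using par_path[OF dCh] by blast
  ultimately have eqg: "g (par d) v0 = g w v0" by simp
  have p0: "par d \<in> V \<union> A" using par_path[OF dCh] by blast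
  have w1: "w \<in> V \<union> A" using w SV by blast
  have h1: "hd (g (par d) v0) = par d" using gamma[OF p0 v0_cell] by (rule conjunct1[OF conjunct2])
  have h2: "hd (g w v0) = w" using gamma[OF w1 v0_cell] by (rule conjunct1[OF conjunct2])
  have "par d = w" using h1 h2 eqg by metis
  then have "d \<in> {d\<in>Ch. par d = w}" using dCh by simp
  then show "\<exists>d\<in>{d\<in>Ch. par d = w}. e = {w,d}" using ed by (rule bexI[rotated])
qed

lemma pr_ch:
  assumes c: "c \<in> Ch"
  shows "card {e\<in>Ec c - {{c, par c}}. q e c \<noteq> 1} \<le> 1"
proof (cases "c \<in> A")
  case True
  have "Ec c - {{c, par c}} = {}"
  proof -
    have cp: "{c, par c} \<in> E" using par_path[OF c] by simp
    show ?thesis unfolding Ec_def using arrow_edges[OF True _ _ cp] by auto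
  qed
  then have eq: "{e\<in>Ec c - {{c, par c}}. q e c \<noteq> 1} = {}" by blast
  show ?thesis unfolding eq by simp
next
  case False
  then have cV: "c \<in> V" using c by blast
  have c0: "c \<in> V \<union> A" using c by blast
  have "{e\<in>Ec c - {{c, par c}}. q e c \<noteq> 1} \<subseteq> {e\<in>E. c \<in> e \<and> e \<notin> path_edges (g v0 c) \<and> q e c \<noteq> 1}"
  proof
    fix e assume e: "e \<in> {e\<in>Ec c - {{c, par c}}. q e c \<noteq> 1}"
    have pe: "path_edges (g v0 c) = insert {c, par c} (set (path_edge_list (g (par c) v0)))"
    proof -
      have p0: "par c \<in> V \<union> A" using par_path[OF c] by simp
      obtain r where r: "g (par c) v0 = par c # r"
        using gamma[OF p0 v0_cell] gamma_ne[OF p0 v0_cell] by (metis list.collapse)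
      have "set (path_edge_list (g v0 c)) = set (path_edge_list (g c v0))"
        unfolding gamma_rev[OF c0 v0_cell] pel_rev set_rev ..
      also have "\<dots> = set (path_edge_list (c # par c # r))" using par_path[OF c] r by simp
      also have "\<dots> = insert {c, par c} (set (path_edge_list (g (par c) v0)))" using r by simp
      finally show ?thesis unfolding path_edges_def .
    qed
    have "e \<notin> set (path_edge_list (g (par c) v0))"
    proof
      assume "e \<in> set (path_edge_list (g (par c) v0))"
      then have "e \<subseteq> set (g (par c) v0)" by (rule pel_subset)
      then show False using e par_path[OF c] unfolding Ec_def by blast
    qed
    then show "e \<in> {e\<in>E. c \<in> e \<and> e \<notin> path_edges (g v0 c) \<and> q e c \<noteq> 1}"
      using e pe unfolding Ec_def by auto
  qed
  moreover have "finite {e\<in>E. c \<in> e \<and> e \<notin> path_edges (g v0 c) \<and> q e c \<noteq> 1}" using finX1 by simp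
  ultimately have "card {e\<in>Ec c - {{c, par c}}. q e c \<noteq> 1} \<le> card {e\<in>E. c \<in> e \<and> e \<notin> path_edges (g v0 c) \<and> q e c \<noteq> 1}"
    by (intro card_mono)
  then show ?thesis using prc[OF cV Ch_ne_v0[OF c]] by linarith
qed

lemma pr_S:
  assumes w: "w \<in> S"
  shows "card {e\<in>Hs w. q e w \<noteq> 1} \<le> 1"
proof (cases "w = v0")
  case True
  then have eq: "{e\<in>Hs w. q e w \<noteq> 1} = {}" using qv0 unfolding Hs_def by auto
  show ?thesis unfolding eq by simp
next
  case False
  have wV: "w \<in> V" using w SV by blast
  have "set (path_edge_list (g v0 w)) \<subseteq> SE" using prefix_path w by blast
  then have "{e\<in>Hs w. q e w \<noteq> 1} \<subseteq> {e\<in>E. w \<in> e \<and> e \<notin> path_edges (g v0 w) \<and> q e w \<noteq> 1}"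
    unfolding Hs_def path_edges_def by blast
  moreover have "finite {e\<in>E. w \<in> e \<and> e \<notin> path_edges (g v0 w) \<and> q e w \<noteq> 1}" using finX1 by simp
  ultimately have "card {e\<in>Hs w. q e w \<noteq> 1} \<le> card {e\<in>E. w \<in> e \<and> e \<notin> path_edges (g v0 w) \<and> q e w \<noteq> 1}"
    by (intro card_mono)
  then show ?thesis using prc[OF wV False] by linarith
qed

end


lemma prod_all_one: "(\<forall>e\<in>F. r e = (1::int)) \<Longrightarrow> prod r F = 1"
  by (rule prod.neutral) simp

lemma AL:
  fixes r :: "'a \<Rightarrow> int"
  assumes fin: "finite F" and c: "card {e\<in>F. r e \<noteq> 1} \<le> 1"
  shows "(\<Sum>e\<in>F. \<Prod>e'\<in>F - {e}. r e') = (int (card F) - 1) * prod r F + 1"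
proof (cases "{e\<in>F. r e \<noteq> 1} = {}")
  case True
  then have one: "\<forall>e\<in>F. r e = 1" by blast
  have "\<And>e. (\<Prod>e'\<in>F - {e}. r e') = 1" using one by (intro prod_all_one) blast
  moreover have "prod r F = 1" using one by (rule prod_all_one)
  ultimately show ?thesis by simp
next
  case False
  have fin2: "finite {e\<in>F. r e \<noteq> 1}" using fin by simp
  have "card {e\<in>F. r e \<noteq> 1} \<noteq> 0" using False fin2 by simp
  then have "card {e\<in>F. r e \<noteq> 1} = 1" using c by linarith
  then obtain e0 where e0: "{e\<in>F. r e \<noteq> 1} = {e0}" using card_1_singletonE by blast
  then have e0F: "e0 \<in> F" and oth: "\<And>e. e \<in> F \<Longrightarrow> e \<noteq> e0 \<Longrightarrow> r e = 1" by blast+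
  have p1: "prod r F = r e0 * prod r (F - {e0})" using prod.remove[OF fin e0F] .
  have p2: "prod r (F - {e0}) = 1" using oth by (intro prod_all_one) blast
  have pe: "(\<Prod>e'\<in>F - {e}. r e') = (if e = e0 then 1 else r e0)" if e: "e \<in> F" for e
  proof (cases "e = e0")
    case True then show ?thesis using p2 by simp
  next
    case False
    have f2: "finite (F - {e})" using fin by simp
    have "e0 \<in> F - {e}" using e0F False by simp
    then have "(\<Prod>e'\<in>F - {e}. r e') = r e0 * prod r (F - {e} - {e0})" using prod.remove[OF f2] by blast
    moreover have "prod r (F - {e} - {e0}) = 1" using oth by (intro prod_all_one) blast
    ultimately show ?thesis using False by simp
  qed
  have "(\<Sum>e\<in>F. \<Prod>e'\<in>F - {e}. r e') = (\<Sum>e\<in>F. if e = e0 then 1 else r e0)"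
    using pe by (rule sum.cong[OF refl])
  also have "\<dots> = 1 + (\<Sum>e\<in>F - {e0}. if e = e0 then 1 else r e0)"
    using sum.remove[OF fin e0F, of "\<lambda>e. if e = e0 then 1 else r e0"] by (simp only:) simp
  also have "(\<Sum>e\<in>F - {e0}. if e = e0 then 1 else r e0) = (\<Sum>e\<in>F - {e0}. r e0)"
    by (rule sum.cong) auto
  also have "\<dots> = int (card (F - {e0})) * r e0" by simp
  also have "int (card (F - {e0})) = int (card F) - 1"
  proof -
    have "card F \<ge> 1" using e0F fin card_0_eq by fastforce
    then show ?thesis using card_Diff_singleton[OF e0F] by simp
  qed
  finally show ?thesis using p1 p2 by (simp add: algebra_simps)
qed

context dpr begin

definition loc where "loc P y = (\<Prod>e\<in>{e\<in>E. y \<in> e \<and> e \<notin> P}. q e y)"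
definition locS where "locS P y = (\<Prod>e\<in>{e\<in>E. y \<in> e \<and> e \<notin> P \<and> e \<in> SE}. q e y)"
definition hb where "hb y = (\<Prod>e\<in>Hs y. q e y)"

lemma xcoef_loc:
  assumes v: "v \<in> V \<union> A" and a: "\<alpha> \<in> V \<union> A"
  shows "xcoef V A E f q v \<alpha> = f \<alpha> * (\<Prod>y\<in>set (g v \<alpha>). loc (path_edges (g v \<alpha>)) y)"
proof -
  have nc: "\<forall>e\<in>E. e \<subseteq> set (g v \<alpha>) \<longrightarrow> e \<in> path_edges (g v \<alpha>)"
    using nochord[OF v a] unfolding path_edges_def by blast
  have c2: "\<forall>e\<in>E. card e = 2" using edge_card by blast
  show ?thesis unfolding xcoef_def loc_def using incident_prod[OF finX1 c2 nc] by simp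
qed

lemma loc_split_gen: "loc P y = locS P y * (\<Prod>e\<in>{e\<in>E. y \<in> e \<and> e \<notin> P \<and> e \<notin> SE}. q e y)"
proof -
  have eq: "{e\<in>E. y \<in> e \<and> e \<notin> P} = {e\<in>E. y \<in> e \<and> e \<notin> P \<and> e \<in> SE} \<union> {e\<in>E. y \<in> e \<and> e \<notin> P \<and> e \<notin> SE}"
    by blast
  show ?thesis unfolding loc_def locS_def eq
    by (rule prod.union_disjoint) (use finX1 in auto)
qed

lemma loc_split: "P \<subseteq> SE \<Longrightarrow> loc P y = locS P y * hb y"
proof -
  assume P: "P \<subseteq> SE"
  have "{e\<in>E. y \<in> e \<and> e \<notin> P \<and> e \<notin> SE} = Hs y" unfolding Hs_def using P by blast
  then show ?thesis using loc_split_gen unfolding hb_def by simp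
qed

lemma loc_insert: "y \<notin> e0 \<Longrightarrow> loc (insert e0 P) y = loc P y"
proof -
  assume "y \<notin> e0"
  then have "{e\<in>E. y \<in> e \<and> e \<notin> insert e0 P} = {e\<in>E. y \<in> e \<and> e \<notin> P}" by blast
  then show ?thesis unfolding loc_def by simp
qed

lemma hb_X: "\<alpha> \<in> X \<Longrightarrow> hb \<alpha> = 1"
proof -
  assume a: "\<alpha> \<in> X"
  have "Hs \<alpha> = {}" unfolding Hs_def using X_edges_SE[OF a] by blast
  then show ?thesis unfolding hb_def by simp
qed

lemma PE_SE: "w \<in> S \<union> X \<Longrightarrow> \<alpha> \<in> X \<Longrightarrow> path_edges (g w \<alpha>) \<subseteq> SE"
  using convex[of w \<alpha>] unfolding path_edges_def by blast

lemma gamma_hd_Cons: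
  assumes "x \<in> V \<union> A" "y \<in> V \<union> A" shows "g x y = x # tl (g x y)"
proof -
  have "g x y \<noteq> []" "hd (g x y) = x" using gamma[OF assms] gamma_ne[OF assms] by auto
  then show ?thesis by (metis list.collapse)
qed

lemma PE_Cons:
  assumes "x \<in> V \<union> A" "y \<in> V \<union> A"
  shows "path_edges (c # g x y) = insert {c, x} (path_edges (g x y))"
proof -
  have "g x y = x # tl (g x y)" using gamma_hd_Cons[OF assms] .
  then have "path_edge_list (c # g x y) = {c,x} # path_edge_list (g x y)"
    by (metis pel_Cons2)
  then show ?thesis unfolding path_edges_def by simp
qed

lemma PE_not_in: "c \<notin> set p \<Longrightarrow> e \<in> path_edges p \<Longrightarrow> c \<notin> e"
  unfolding path_edges_def using pel_subset by blast

definition R where "R \<alpha> w = f \<alpha> * (\<Prod>y\<in>set (g w \<alpha>) - {w}. loc (path_edges (g w \<alpha>)) y)"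
definition xp where "xp \<alpha> c = f \<alpha> * (\<Prod>y\<in>set (g (par c) \<alpha>). loc (path_edges (g c \<alpha>)) y)"

lemma w_in_path: "w \<in> V \<union> A \<Longrightarrow> \<alpha> \<in> V \<union> A \<Longrightarrow> w \<in> set (g w \<alpha>)"
  using gamma_hd_Cons by (metis list.set_intros(1))

lemma I1:
  assumes w: "w \<in> S" and a: "\<alpha> \<in> X"
  shows "xcoef V A E f q w \<alpha> = locS (path_edges (g w \<alpha>)) w * hb w * R \<alpha> w"
proof -
  have w0: "w \<in> V \<union> A" using w SV by blast
  have a0: "\<alpha> \<in> V \<union> A" using a by blast
  have "xcoef V A E f q w \<alpha> = f \<alpha> * (loc (path_edges (g w \<alpha>)) w * (\<Prod>y\<in>set (g w \<alpha>) - {w}. loc (path_edges (g w \<alpha>)) y))"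
    using xcoef_loc[OF w0 a0] prod.remove[OF finite_set w_in_path[OF w0 a0], of "loc (path_edges (g w \<alpha>))"] by simp
  also have "loc (path_edges (g w \<alpha>)) w = locS (path_edges (g w \<alpha>)) w * hb w"
    using loc_split PE_SE w a by blast
  finally show ?thesis unfolding R_def by (simp add: algebra_simps)
qed

lemma loc_head:
  assumes c: "c \<in> Ch" and a: "\<alpha> \<in> X"
  shows "loc (path_edges (g c \<alpha>)) c = (\<Prod>e\<in>Ec c - {{c, par c}}. q e c)"
proof -
  have p0: "par c \<in> V \<union> A" using par_path[OF c] by blast
  have a0: "\<alpha> \<in> V \<union> A" using a by blast
  have gc: "g c \<alpha> = c # g (par c) \<alpha>" using par_alpha[OF c a] .
  have cn: "c \<notin> set (g (par c) \<alpha>)" using gamma_distinct[of c \<alpha>] gc a0 c by (metis Ch_cell distinct.simps(2))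
  have "{e\<in>E. c \<in> e \<and> e \<notin> path_edges (g c \<alpha>)} = Ec c - {{c, par c}}"
    unfolding gc PE_Cons[OF p0 a0] Ec_def using PE_not_in[OF cn] by blast
  then show ?thesis unfolding loc_def by simp
qed

lemma I3:
  assumes c: "c \<in> Ch" and a: "\<alpha> \<in> X"
  shows "xcoef V A E f q c \<alpha> = (\<Prod>e\<in>Ec c - {{c, par c}}. q e c) * xp \<alpha> c"
proof -
  have c0: "c \<in> V \<union> A" using c by blast
  have a0: "\<alpha> \<in> V \<union> A" using a by blast
  have gc: "g c \<alpha> = c # g (par c) \<alpha>" using par_alpha[OF c a] .
  have cn: "c \<notin> set (g (par c) \<alpha>)" using gamma_distinct[of c \<alpha>] gc a0 c by (metis Ch_cell distinct.simps(2))
  have "xcoef V A E f q c \<alpha> = f \<alpha> * (\<Prod>y\<in>insert c (set (g (par c) \<alpha>)). loc (path_edges (g c \<alpha>)) y)"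
    using xcoef_loc[OF c0 a0] gc by simp
  also have "\<dots> = f \<alpha> * (loc (path_edges (g c \<alpha>)) c * (\<Prod>y\<in>set (g (par c) \<alpha>). loc (path_edges (g c \<alpha>)) y))"
    using prod.insert[OF finite_set cn, of "loc (path_edges (g c \<alpha>))"] by simp
  finally show ?thesis unfolding xp_def loc_head[OF c a] by (simp add: algebra_simps)
qed

lemma I4:
  assumes d: "d \<in> Ch" and c: "par d = c" "c \<in> Ch" and a: "\<alpha> \<in> X"
  shows "xp \<alpha> d = (\<Prod>e\<in>Ec c - {{c, par c}} - {{c,d}}. q e c) * xp \<alpha> c"
proof -
  have a0: "\<alpha> \<in> V \<union> A" using a by blast
  have c0: "c \<in> V \<union> A" using c by blast
  have d0: "d \<in> V \<union> A" using d by blast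
  have p0: "par c \<in> V \<union> A" using par_path[OF c(2)] by blast
  have gd: "g d \<alpha> = d # g c \<alpha>" using par_alpha[OF d a] c by simp
  have gc: "g c \<alpha> = c # g (par c) \<alpha>" using par_alpha[OF c(2) a] .
  have dn: "d \<notin> set (g c \<alpha>)" using gamma_distinct[OF d0 a0] gd by (metis distinct.simps(2))
  have cn: "c \<notin> set (g (par c) \<alpha>)" using gamma_distinct[OF c0 a0] gc by (metis distinct.simps(2))
  have ped: "path_edges (g d \<alpha>) = insert {d,c} (path_edges (g c \<alpha>))" using gd PE_Cons[OF c0 a0] by simp
  have rest: "loc (path_edges (g d \<alpha>)) y = loc (path_edges (g c \<alpha>)) y" if y: "y \<in> set (g (par c) \<alpha>)" for y
  proof -
    have "y \<noteq> d" using dn y gc by auto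
    moreover have "y \<noteq> c" using cn y by auto
    ultimately show ?thesis unfolding ped by (intro loc_insert) simp
  qed
  have hd: "loc (path_edges (g d \<alpha>)) c = (\<Prod>e\<in>Ec c - {{c, par c}} - {{c,d}}. q e c)"
  proof -
    have "{e\<in>E. c \<in> e \<and> e \<notin> path_edges (g d \<alpha>)} = Ec c - {{c, par c}} - {{c,d}}"
      unfolding ped gc PE_Cons[OF p0 a0] Ec_def using PE_not_in[OF cn] by (auto simp: insert_commute)
    then show ?thesis unfolding loc_def by simp
  qed
  have "xp \<alpha> d = f \<alpha> * (\<Prod>y\<in>insert c (set (g (par c) \<alpha>)). loc (path_edges (g d \<alpha>)) y)"
    unfolding xp_def using c gc by simp
  also have "\<dots> = f \<alpha> * (loc (path_edges (g d \<alpha>)) c * (\<Prod>y\<in>set (g (par c) \<alpha>). loc (path_edges (g c \<alpha>)) y))"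
    using prod.insert[OF finite_set cn, of "loc (path_edges (g d \<alpha>))"] prod.cong[OF refl rest, of "set (g (par c) \<alpha>)"] by simp
  finally show ?thesis unfolding xp_def hd by (simp add: algebra_simps)
qed

lemma I2:
  assumes d: "d \<in> Ch" and w: "par d = w" "w \<in> S" and a: "\<alpha> \<in> X"
  shows "xp \<alpha> d = locS (path_edges (g w \<alpha>)) w * (\<Prod>e\<in>Hs w - {{w,d}}. q e w) * R \<alpha> w"
proof -
  have a0: "\<alpha> \<in> V \<union> A" using a by blast
  have w0: "w \<in> V \<union> A" using w SV by blast
  have gd: "g d \<alpha> = d # g w \<alpha>" using par_alpha[OF d a] w by simp
  have dn: "d \<notin> set (g w \<alpha>)" using convex[of w \<alpha>] w a d by blast
  have ped: "path_edges (g d \<alpha>) = insert {w,d} (path_edges (g w \<alpha>))"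
    using gd PE_Cons[OF w0 a0] by (simp add: insert_commute)
  have rest: "loc (path_edges (g d \<alpha>)) y = loc (path_edges (g w \<alpha>)) y" if y: "y \<in> set (g w \<alpha>) - {w}" for y
  proof -
    have "y \<noteq> d" using dn y by auto
    then show ?thesis unfolding ped using y by (intro loc_insert) simp
  qed
  have wdSE: "{w,d} \<notin> SE" using SE_cells d by blast
  have hd: "loc (path_edges (g d \<alpha>)) w = locS (path_edges (g w \<alpha>)) w * (\<Prod>e\<in>Hs w - {{w,d}}. q e w)"
  proof -
    have s1: "{e\<in>E. w \<in> e \<and> e \<notin> path_edges (g d \<alpha>) \<and> e \<in> SE} = {e\<in>E. w \<in> e \<and> e \<notin> path_edges (g w \<alpha>) \<and> e \<in> SE}"
      unfolding ped using wdSE by blast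
    have s2: "{e\<in>E. w \<in> e \<and> e \<notin> path_edges (g d \<alpha>) \<and> e \<notin> SE} = Hs w - {{w,d}}"
      unfolding ped Hs_def using PE_SE[of w \<alpha>] w a by blast
    show ?thesis using loc_split_gen[of "path_edges (g d \<alpha>)" w] unfolding locS_def s1 s2 .
  qed
  have wi: "w \<in> set (g w \<alpha>)" using w_in_path[OF w0 a0] .
  have "xp \<alpha> d = f \<alpha> * (loc (path_edges (g d \<alpha>)) w * (\<Prod>y\<in>set (g w \<alpha>) - {w}. loc (path_edges (g d \<alpha>)) y))"
    unfolding xp_def using w prod.remove[OF finite_set wi, of "loc (path_edges (g d \<alpha>))"] by simp
  also have "(\<Prod>y\<in>set (g w \<alpha>) - {w}. loc (path_edges (g d \<alpha>)) y) = (\<Prod>y\<in>set (g w \<alpha>) - {w}. loc (path_edges (g w \<alpha>)) y)"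
    using rest by (rule prod.cong[OF refl])
  finally show ?thesis unfolding R_def hd by (simp add: algebra_simps)
qed

end


context dpr begin

lemma finCh: "finite Ch" using finX0 by simp

lemma Ec_fin: "finite (Ec c)" unfolding Ec_def using finX1 by simp

lemma tele_ch:
  assumes c: "c \<in> Ch" and a: "\<alpha> \<in> X"
  shows "(\<Sum>d\<in>{d\<in>Ch. par d = c}. xp \<alpha> d) = (int (valency E c) - 2) * xcoef V A E f q c \<alpha> + xp \<alpha> c"
proof -
  define F where "F = Ec c - {{c, par c}}"
  have "(\<Sum>d\<in>{d\<in>Ch. par d = c}. xp \<alpha> d) = (\<Sum>d\<in>{d\<in>Ch. par d = c}. (\<lambda>e. (\<Prod>e'\<in>F - {e}. q e' c) * xp \<alpha> c) {c,d})"
  proof (rule sum.cong[OF refl])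
    fix d assume "d \<in> {d\<in>Ch. par d = c}"
    then have d: "d \<in> Ch" "par d = c" by auto
    show "xp \<alpha> d = (\<lambda>e. (\<Prod>e'\<in>F - {e}. q e' c) * xp \<alpha> c) {c,d}"
      unfolding F_def using I4[OF d c a] by simp
  qed
  also have "\<dots> = (\<Sum>e\<in>F. (\<Prod>e'\<in>F - {e}. q e' c) * xp \<alpha> c)"
    unfolding F_def by (rule sum.reindex_bij_betw[OF bij_ch[OF c]])
  also have "\<dots> = (\<Sum>e\<in>F. (\<Prod>e'\<in>F - {e}. q e' c)) * xp \<alpha> c"
    by (simp add: sum_distrib_right)
  also have "(\<Sum>e\<in>F. (\<Prod>e'\<in>F - {e}. q e' c)) = (int (card F) - 1) * (\<Prod>e\<in>F. q e c) + 1"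
  proof -
    have "finite F" unfolding F_def using Ec_fin by simp
    moreover have "card {e\<in>F. q e c \<noteq> 1} \<le> 1" unfolding F_def using pr_ch[OF c] .
    ultimately show ?thesis by (rule AL)
  qed
  also have "int (card F) = int (valency E c) - 1"
  proof -
    have cp: "{c, par c} \<in> Ec c" unfolding Ec_def using par_path[OF c] by simp
    have c1: "card F = card (Ec c) - 1" unfolding F_def by (rule card_Diff_singleton[OF cp])
    have c2: "card (Ec c) \<noteq> 0" using cp Ec_fin by auto
    have c3: "valency E c = card (Ec c)" unfolding valency_def Ec_def ..
    show ?thesis using c1 c2 c3 by simp
  qed
  finally have eq: "(\<Sum>d\<in>{d\<in>Ch. par d = c}. xp \<alpha> d) = ((int (valency E c) - 1 - 1) * (\<Prod>e\<in>F. q e c) + 1) * xp \<alpha> c" .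
  have x: "xcoef V A E f q c \<alpha> = (\<Prod>e\<in>F. q e c) * xp \<alpha> c" unfolding F_def by (rule I3[OF c a])
  show ?thesis unfolding eq x by (simp add: algebra_simps)
qed

lemma tele_S:
  assumes w: "w \<in> S" and a: "\<alpha> \<in> X"
  shows "(\<Sum>d\<in>{d\<in>Ch. par d = w}. xp \<alpha> d)
     = locS (path_edges (g w \<alpha>)) w * R \<alpha> w * ((int (card (Hs w)) - 1) * hb w + 1)"
proof -
  let ?L = "locS (path_edges (g w \<alpha>)) w * R \<alpha> w"
  have "(\<Sum>d\<in>{d\<in>Ch. par d = w}. xp \<alpha> d) = (\<Sum>d\<in>{d\<in>Ch. par d = w}. (\<lambda>e. ?L * (\<Prod>e'\<in>Hs w - {e}. q e' w)) {w,d})"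
  proof (rule sum.cong[OF refl])
    fix d assume "d \<in> {d\<in>Ch. par d = w}"
    then have d: "d \<in> Ch" "par d = w" by auto
    show "xp \<alpha> d = (\<lambda>e. ?L * (\<Prod>e'\<in>Hs w - {e}. q e' w)) {w,d}"
      using I2[OF d w a] by (simp add: algebra_simps)
  qed
  also have "\<dots> = (\<Sum>e\<in>Hs w. ?L * (\<Prod>e'\<in>Hs w - {e}. q e' w))"
    by (rule sum.reindex_bij_betw[OF bij_S[OF w]])
  also have "\<dots> = ?L * (\<Sum>e\<in>Hs w. (\<Prod>e'\<in>Hs w - {e}. q e' w))"
    by (simp add: sum_distrib_left)
  also have "(\<Sum>e\<in>Hs w. (\<Prod>e'\<in>Hs w - {e}. q e' w)) = (int (card (Hs w)) - 1) * hb w + 1"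
    unfolding hb_def using AL[of "Hs w" "\<lambda>e. q e w"] pr_S[OF w] finX1 unfolding Hs_def by simp
  finally show ?thesis .
qed

lemma group_par:
  assumes T: "T \<subseteq> V \<union> A" "finite T"
  shows "(\<Sum>c\<in>T. \<Sum>d\<in>{d\<in>Ch. par d = c}. h d) = (\<Sum>d\<in>{d\<in>Ch. par d \<in> T}. h d)"
proof -
  have "(\<Sum>c\<in>T. \<Sum>d\<in>{x. x \<in> {d\<in>Ch. par d \<in> T} \<and> par x = c}. h d) = (\<Sum>d\<in>{d\<in>Ch. par d \<in> T}. h d)"
  proof (rule sum.group)
    show "finite {d\<in>Ch. par d \<in> T}" by (rule finite_subset[OF _ finCh]) blast
    show "finite T" by (rule T(2))
    show "par ` {d\<in>Ch. par d \<in> T} \<subseteq> T" by blast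
  qed
  moreover have "(\<Sum>c\<in>T. \<Sum>d\<in>{x. x \<in> {d\<in>Ch. par d \<in> T} \<and> par x = c}. h d) = (\<Sum>c\<in>T. \<Sum>d\<in>{d\<in>Ch. par d = c}. h d)"
  proof (rule sum.cong[OF refl])
    fix c assume "c \<in> T"
    then have "{x. x \<in> {d\<in>Ch. par d \<in> T} \<and> par x = c} = {d\<in>Ch. par d = c}" by auto
    then show "(\<Sum>d\<in>{x. x \<in> {d\<in>Ch. par d \<in> T} \<and> par x = c}. h d) = (\<Sum>d\<in>{d\<in>Ch. par d = c}. h d)" by simp
  qed
  ultimately show ?thesis by simp
qed

lemma Ch_sum:
  assumes a: "\<alpha> \<in> X"
  shows "(\<Sum>c\<in>Ch. xcoef V A E f q c \<alpha> * (int (valency E c) - 2))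
    = - (\<Sum>w\<in>S. locS (path_edges (g w \<alpha>)) w * R \<alpha> w * ((int (card (Hs w)) - 1) * hb w + 1))"
proof -
  have "(\<Sum>c\<in>Ch. xcoef V A E f q c \<alpha> * (int (valency E c) - 2))
     = (\<Sum>c\<in>Ch. (\<Sum>d\<in>{d\<in>Ch. par d = c}. xp \<alpha> d) - xp \<alpha> c)"
    using tele_ch[OF _ a] by (intro sum.cong) (auto simp: algebra_simps)
  also have "\<dots> = (\<Sum>c\<in>Ch. \<Sum>d\<in>{d\<in>Ch. par d = c}. xp \<alpha> d) - (\<Sum>c\<in>Ch. xp \<alpha> c)"
    by (simp add: sum_subtractf)
  also have "(\<Sum>c\<in>Ch. \<Sum>d\<in>{d\<in>Ch. par d = c}. xp \<alpha> d) = (\<Sum>d\<in>{d\<in>Ch. par d \<in> Ch}. xp \<alpha> d)"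
    using group_par[of Ch] finCh by blast
  also have "(\<Sum>c\<in>Ch. xp \<alpha> c) = (\<Sum>d\<in>{d\<in>Ch. par d \<in> Ch}. xp \<alpha> d) + (\<Sum>d\<in>{d\<in>Ch. par d \<in> S}. xp \<alpha> d)"
  proof -
    have "Ch = {d\<in>Ch. par d \<in> Ch} \<union> {d\<in>Ch. par d \<in> S}"
    proof -
      have "par d \<in> Ch \<or> par d \<in> S" if "d \<in> Ch" for d
        using par_V[OF that] VA by blast
      then show ?thesis by blast
    qed
    moreover have "{d\<in>Ch. par d \<in> Ch} \<inter> {d\<in>Ch. par d \<in> S} = {}" by blast
    ultimately show ?thesis using finCh
      by (metis (no_types, lifting) finite_Un sum.union_disjoint)
  qed
  also have "(\<Sum>d\<in>{d\<in>Ch. par d \<in> S}. xp \<alpha> d) = (\<Sum>w\<in>S. \<Sum>d\<in>{d\<in>Ch. par d = w}. xp \<alpha> d)"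
  proof -
    have "S \<subseteq> V \<union> A" using SV by blast
    from group_par[OF this finS, of "xp \<alpha>"] show ?thesis by simp
  qed
  also have "\<dots> = (\<Sum>w\<in>S. locS (path_edges (g w \<alpha>)) w * R \<alpha> w * ((int (card (Hs w)) - 1) * hb w + 1))"
    using tele_S[OF _ a] by (rule sum.cong[OF refl])
  finally show ?thesis by simp
qed

definition TT where "TT \<alpha> = (\<Sum>v\<in>V \<union> A0 A f. xcoef V A E f q v \<alpha> * (int (valency E v) - 2))"

lemma VA0: "V \<union> A0 A f = S \<union> Ch" and SCh: "S \<inter> Ch = {}"
proof -
  show "S \<inter> Ch = {}" by blast
  show "V \<union> A0 A f = S \<union> Ch"
  proof
    show "V \<union> A0 A f \<subseteq> S \<union> Ch"
    proof
      fix v assume v: "v \<in> V \<union> A0 A f"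
      have "v \<notin> X" using v VA unfolding A0_def by auto
      moreover have "v \<in> V \<union> A" using v unfolding A0_def by auto
      ultimately show "v \<in> S \<union> Ch" by blast
    qed
    show "S \<union> Ch \<subseteq> V \<union> A0 A f" using SV unfolding A0_def by auto
  qed
qed

lemma TT_formula:
  assumes a: "\<alpha> \<in> X"
  shows "TT \<alpha> = (\<Sum>w\<in>S. locS (path_edges (g w \<alpha>)) w * R \<alpha> w *
     (hb w * (int (valency E w) - 2) - ((int (card (Hs w)) - 1) * hb w + 1)))"
proof -
  have "TT \<alpha> = (\<Sum>v\<in>S. xcoef V A E f q v \<alpha> * (int (valency E v) - 2)) + (\<Sum>v\<in>Ch. xcoef V A E f q v \<alpha> * (int (valency E v) - 2))"
    unfolding TT_def VA0 by (rule sum.union_disjoint) (use finS finCh SCh in auto)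
  also have "(\<Sum>v\<in>S. xcoef V A E f q v \<alpha> * (int (valency E v) - 2))
     = (\<Sum>w\<in>S. locS (path_edges (g w \<alpha>)) w * R \<alpha> w * (hb w * (int (valency E w) - 2)))"
    using I1[OF _ a] by (intro sum.cong) (auto simp: algebra_simps)
  also note Ch_sum[OF a]
  finally show ?thesis by (simp add: sum_subtractf[symmetric] algebra_simps)
qed

end


context dpr begin

abbreviation "Bn \<equiv> {v\<in>S. bval V A E q v0 X v \<noteq> 1}"
abbreviation "V' \<equiv> TX_V V A E v0 X"
abbreviation "A' \<equiv> TX_A V A E q v0 X"
abbreviation "E' \<equiv> TX_E V A E q v0 X"
abbreviation "f' \<equiv> TX_f f"
abbreviation "q' \<equiv> TX_q V A E q v0 X"
abbreviation "g' \<equiv> gamma (V' \<union> A') E'"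

lemma bval_hb: "bval V A E q v0 X v = hb v"
  unfolding bval_def hb_def Hs_def ..

lemma BnS: "Bn \<subseteq> S" by blast

lemma V'_def: "V' = Inl ` S" unfolding TX_V_def ..
lemma A'_def: "A' = Inl ` X \<union> Inr ` Bn" unfolding TX_A_def ..
lemma E'_def: "E' = (\<lambda>e. Inl ` e) ` SE \<union> (\<lambda>v. {Inl v, Inr v}) ` Bn" unfolding TX_E_def ..

lemma inj_imInl: "inj_on (\<lambda>e. Inl ` e) M"
  by (rule inj_onI) (simp add: inj_image_eq_iff)

lemma new_not_img: "{Inl v, Inr v} \<noteq> Inl ` e"
proof
  assume "{Inl v, Inr v} = Inl ` e"
  then have "Inr v \<in> Inl ` e" by blast
  then show False by blast
qed

lemma E'_cases:
  assumes "e' \<in> E'"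
  obtains (img) e where "e \<in> SE" "e' = Inl ` e" | (new) v where "v \<in> Bn" "e' = {Inl v, Inr v}"
  using assms unfolding E'_def by blast

lemma Inr_edge: "e' \<in> E' \<Longrightarrow> Inr v \<in> e' \<Longrightarrow> e' = {Inl v, Inr v} \<and> v \<in> Bn"
  by (erule E'_cases) auto

lemma E'_Inl: "Inl ` e \<in> E' \<longleftrightarrow> e \<in> SE"
proof
  assume "Inl ` e \<in> E'"
  then show "e \<in> SE"
  proof (cases rule: E'_cases)
    case (img e0)
    then have "e = e0" by (simp add: inj_image_eq_iff)
    then show ?thesis using img(1) by simp
  next
    case (new v) then show ?thesis using new_not_img[of v e] by simp
  qed
next
  assume "e \<in> SE"
  then have "Inl ` e \<in> (\<lambda>e. Inl ` e) ` SE" by (rule imageI)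
  then show "Inl ` e \<in> E'" unfolding E'_def by (rule UnI1)
qed

lemma finSE: "finite SE" using SE_E finX1 finite_subset by blast
lemma finBn: "finite Bn" using finS by simp
lemma finE': "finite E'" unfolding E'_def using finSE finBn by simp

lemma card2': "e' \<in> E' \<Longrightarrow> card e' = 2"
proof (erule E'_cases)
  fix e assume "e \<in> SE" "e' = Inl ` e"
  then show "card e' = 2" using edge_card SE_E card_image[of Inl e] by auto
next
  fix v assume "e' = {Inl v, Inr v}"
  then show "card e' = 2" by simp
qed

lemma A0': "A0 A' f' = Inr ` Bn"
proof -
  have "A0 A' f' = {a\<in>A'. f' a = 0}" by (rule A0_def)
  also have "\<dots> = Inr ` Bn"
  proof
    show "{a\<in>A'. f' a = 0} \<subseteq> Inr ` Bn"
    proof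
      fix a assume a: "a \<in> {a\<in>A'. f' a = 0}"
      then have a1: "a \<in> Inl ` X \<union> Inr ` Bn" and a2: "f' a = 0" unfolding A'_def by auto
      show "a \<in> Inr ` Bn"
      proof (cases a)
        case (Inl x)
        then have "x \<in> X" using a1 by blast
        then have "f x \<noteq> 0" by (rule Xf)
        then show ?thesis using a2 Inl unfolding TX_f_def by simp
      next
        case (Inr v) then show ?thesis using a1 by blast
      qed
    qed
    show "Inr ` Bn \<subseteq> {a\<in>A'. f' a = 0}" unfolding A'_def TX_f_def by auto
  qed
  finally show ?thesis .
qed

lemma AX': "A' - A0 A' f' = Inl ` X"
proof -
  have "A' - A0 A' f' = A' - Inr ` Bn" by (simp only: A0')
  also have "\<dots> = Inl ` X" unfolding A'_def by blast
  finally show ?thesis .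
qed

lemma VA0': "V' \<union> A0 A' f' = Inl ` S \<union> Inr ` Bn"
  unfolding A0' V'_def ..

lemma Inl_cell: "Inl y \<in> V' \<union> A' \<longleftrightarrow> y \<in> S \<union> X"
  unfolding V'_def A'_def by auto

lemma val_Inl:
  assumes w: "w \<in> S"
  shows "valency E' (Inl w) = card {e\<in>SE. w \<in> e} + (if w \<in> Bn then 1 else 0)"
proof -
  let ?I = "(\<lambda>e. Inl ` e) ` {e\<in>SE. w \<in> e} :: ('c + 'c) set set"
  have fin1: "finite ?I" using finSE by simp
  have ci: "card ?I = card {e\<in>SE. w \<in> e}" by (rule card_image[OF inj_imInl])
  show ?thesis
  proof (cases "w \<in> Bn")
    case True
    have eq: "{e'\<in>E'. Inl w \<in> e'} = insert {Inl w, Inr w} ?I"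
      unfolding E'_def using True by auto
    have "{Inl w, Inr w} \<notin> ?I" using new_not_img by blast
    then have "card (insert {Inl w, Inr w} ?I) = Suc (card ?I)" by (rule card_insert_disjoint[OF fin1])
    then show ?thesis unfolding valency_def eq ci using True by simp
  next
    case False
    have eq: "{e'\<in>E'. Inl w \<in> e'} = ?I"
      unfolding E'_def using False by auto
    show ?thesis unfolding valency_def eq ci using False by simp
  qed
qed

lemma val_Inr:
  assumes w: "w \<in> Bn"
  shows "valency E' (Inr w) = 1"
proof -
  have "{e'\<in>E'. Inr w \<in> e'} = {{Inl w, Inr w}}"
    using Inr_edge w unfolding E'_def by blast
  then show ?thesis unfolding valency_def by simp
qed

lemma val_T:
  assumes w: "w \<in> V"
  shows "valency E w = card {e\<in>SE. w \<in> e} + card (Hs w)"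
proof -
  have eq: "{e\<in>E. w \<in> e} = {e\<in>SE. w \<in> e} \<union> Hs w" unfolding Hs_def using SE_E by blast
  have "card ({e\<in>SE. w \<in> e} \<union> Hs w) = card {e\<in>SE. w \<in> e} + card (Hs w)"
    by (rule card_Un_disjoint) (use finSE finX1 in \<open>auto simp: Hs_def\<close>)
  then show ?thesis unfolding valency_def eq .
qed

end


lemma gamma_eqI:
  assumes "is_path X0 X1 p" "hd p = x" "last p = y"
    and "\<And>p'. is_path X0 X1 p' \<Longrightarrow> hd p' = x \<Longrightarrow> last p' = y \<Longrightarrow> p' = p"
  shows "gamma X0 X1 x y = p"
  unfolding gamma_def
proof (rule the_equality)
  show "is_path X0 X1 p \<and> hd p = x \<and> last p = y" using assms(1-3) by blast
  fix p' assume "is_path X0 X1 p' \<and> hd p' = x \<and> last p' = y"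
  then show "p' = p" using assms(4) by blast
qed

context dpr begin

lemma distinct_imInl: "distinct (map (\<lambda>e. Inl ` e) l) \<longleftrightarrow> distinct l"
  using distinct_map inj_imInl by blast

lemma is_path_mapInl:
  assumes p: "is_path (V \<union> A) E p" and s: "set p \<subseteq> S \<union> X" and e: "set (path_edge_list p) \<subseteq> SE"
  shows "is_path (V' \<union> A') E' (map Inl p)"
proof -
  have "set (map Inl p) \<subseteq> V' \<union> A'" using s Inl_cell by auto
  moreover have "set (path_edge_list (map Inl p)) \<subseteq> E'"
    unfolding pel_map using e E'_Inl by auto
  moreover have "distinct (path_edge_list (map Inl p))"
    unfolding pel_map distinct_imInl using p unfolding is_path_def by blast
  ultimately show ?thesis using p unfolding is_path_def by simp
qed

lemma is_path_unInl:
  assumes p: "is_path (V' \<union> A') E' (map Inl p)"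
  shows "is_path (V \<union> A) E p"
proof -
  have "set p \<subseteq> V \<union> A"
  proof
    fix y assume "y \<in> set p"
    then have "Inl y \<in> V' \<union> A'" using p unfolding is_path_def by auto
    then show "y \<in> V \<union> A" using Inl_cell SX_cells by blast
  qed
  moreover have "set (path_edge_list p) \<subseteq> E"
  proof
    fix e assume "e \<in> set (path_edge_list p)"
    then have "Inl ` e \<in> E'" using p unfolding is_path_def pel_map by auto
    then show "e \<in> E" using E'_Inl SE_E by blast
  qed
  moreover have "distinct (path_edge_list p)"
    using p unfolding is_path_def pel_map distinct_imInl by blast
  ultimately show ?thesis using p unfolding is_path_def by simp
qed

lemma no_Inr_interior:
  assumes p: "is_path (V' \<union> A') E' p" and v: "Inr v \<in> set p"
  shows "Inr v = hd p \<or> Inr v = last p"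
proof (rule ccontr)
  assume "\<not> (Inr v = hd p \<or> Inr v = last p)"
  then have n: "Inr v \<noteq> hd p" "Inr v \<noteq> last p" by auto
  obtain l1 l2 where s: "p = l1 @ Inr v # l2" using v split_list by metis
  have "l1 \<noteq> []" using n s by auto
  moreover have "l2 \<noteq> []" using n s by auto
  ultimately have i: "{last l1, Inr v} \<in> E' \<and> {Inr v, hd l2} \<in> E' \<and> {last l1, Inr v} \<noteq> {Inr v, hd l2}"
    using is_path_interior p s by metis
  have "{last l1, Inr v} = {Inl v, Inr v}" using Inr_edge i by blast
  moreover have "{Inr v, hd l2} = {Inl v, Inr v}" using Inr_edge i by blast
  ultimately show False using i by simp
qed

lemma all_Inl:
  assumes p: "is_path (V' \<union> A') E' p" and h: "hd p = Inl w" and l: "last p = Inl \<alpha>"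
  shows "p = map Inl (map projl p)"
proof -
  have "\<forall>x\<in>set p. Inl (projl x) = x"
  proof
    fix x assume x: "x \<in> set p"
    show "Inl (projl x) = x"
    proof (cases x)
      case (Inl y) then show ?thesis by simp
    next
      case (Inr v)
      then have "Inr v = hd p \<or> Inr v = last p" using no_Inr_interior[OF p] x by simp
      then show ?thesis using h l by simp
    qed
  qed
  then show ?thesis by (simp add: map_idI)
qed

lemma unique1:
  assumes p: "is_path (V' \<union> A') E' p" and h: "hd p = Inl w" and l: "last p = Inl \<alpha>"
  shows "p = map Inl (g w \<alpha>)"
proof -
  define p0 where "p0 = map projl p"
  have pp: "p = map Inl p0" unfolding p0_def by (rule all_Inl[OF p h l])
  have ne: "p0 \<noteq> []" using p pp unfolding is_path_def by auto
  have "is_path (V \<union> A) E p0" using is_path_unInl p pp by simp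
  moreover have "hd p0 = w" using h pp ne by (simp add: hd_map)
  moreover have "last p0 = \<alpha>" using l pp ne by (simp add: last_map)
  ultimately have "g w \<alpha> = p0" by (rule gamma_uniq)
  then show ?thesis using pp by simp
qed

lemma unique2:
  assumes p: "is_path (V' \<union> A') E' p" and h: "hd p = Inr w" and l: "last p = Inl \<alpha>"
  shows "p = Inr w # map Inl (g w \<alpha>)"
proof -
  have ne: "p \<noteq> []" using p unfolding is_path_def by simp
  then have p1: "p = Inr w # tl p" using h by (metis list.collapse)
  have "tl p \<noteq> []"
  proof
    assume "tl p = []" then have "last p = Inr w" using p1 by (metis last.simps)
    then show False using l by simp
  qed
  then have p2: "tl p = hd (tl p) # tl (tl p)" by simp
  have "is_path (V' \<union> A') E' (Inr w # hd (tl p) # tl (tl p))" using p p1 p2 by metis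
  then have e: "{Inr w, hd (tl p)} \<in> E'" and pt: "is_path (V' \<union> A') E' (hd (tl p) # tl (tl p))"
    unfolding is_path_Cons2 by auto
  have "{Inr w, hd (tl p)} = {Inl w, Inr w}" using Inr_edge[OF e] by simp
  then have "hd (tl p) = Inl w" by (auto simp: doubleton_eq_iff)
  moreover have "last (tl p) = Inl \<alpha>" using l p1 \<open>tl p \<noteq> []\<close> by (metis last_ConsR)
  ultimately have "tl p = map Inl (g w \<alpha>)" using unique1 pt p2 by (metis list.sel(1))
  then show ?thesis using p1 by simp
qed

lemma gamma'_Inl:
  assumes w: "w \<in> S \<union> X" and a: "\<alpha> \<in> X"
  shows "g' (Inl w) (Inl \<alpha>) = map Inl (g w \<alpha>)"
proof -
  have w0: "w \<in> V \<union> A" and a0: "\<alpha> \<in> V \<union> A" using w a SX_cells by auto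
  have gp: "is_path (V \<union> A) E (g w \<alpha>)" "hd (g w \<alpha>) = w" "last (g w \<alpha>) = \<alpha>" "g w \<alpha> \<noteq> []"
    using gamma[OF w0 a0] gamma_ne[OF w0 a0] by auto
  have cv: "set (g w \<alpha>) \<subseteq> S \<union> X" "set (path_edge_list (g w \<alpha>)) \<subseteq> SE"
    using convex[OF w] a by blast+
  have "is_path (V' \<union> A') E' (map Inl (g w \<alpha>))"
    by (rule is_path_mapInl[OF gp(1) cv])
  moreover have "hd (map Inl (g w \<alpha>)) = Inl w" using gp by (simp add: hd_map)
  moreover have "last (map Inl (g w \<alpha>)) = Inl \<alpha>" using gp by (simp add: last_map)
  ultimately show ?thesis by (rule gamma_eqI) (rule unique1)
qed

lemma gamma'_Inr:
  assumes w: "w \<in> Bn" and a: "\<alpha> \<in> X"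
  shows "g' (Inr w) (Inl \<alpha>) = Inr w # map Inl (g w \<alpha>)"
proof -
  have wS: "w \<in> S \<union> X" using w by blast
  have w0: "w \<in> V \<union> A" and a0: "\<alpha> \<in> V \<union> A" using wS a SX_cells by auto
  have gp: "is_path (V \<union> A) E (g w \<alpha>)" "hd (g w \<alpha>) = w" "last (g w \<alpha>) = \<alpha>" "g w \<alpha> \<noteq> []"
    using gamma[OF w0 a0] gamma_ne[OF w0 a0] by auto
  have cv: "set (g w \<alpha>) \<subseteq> S \<union> X" "set (path_edge_list (g w \<alpha>)) \<subseteq> SE"
    using convex[OF wS] a by blast+
  have p1: "is_path (V' \<union> A') E' (map Inl (g w \<alpha>))"
    by (rule is_path_mapInl[OF gp(1) cv])
  obtain r where r: "g w \<alpha> = w # r" using gp by (metis list.collapse)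
  have "{Inl w, Inr w} \<in> (\<lambda>v. {Inl v, Inr v}) ` Bn" using w by (rule imageI)
  then have "{Inr w, Inl w} \<in> E'" unfolding E'_def by (simp add: insert_commute)
  moreover have "Inr w \<in> V' \<union> A'" unfolding A'_def using w by blast
  moreover have "{Inr w, Inl w} \<notin> set (path_edge_list (map Inl (g w \<alpha>)))"
  proof
    assume "{Inr w, Inl w} \<in> set (path_edge_list (map Inl (g w \<alpha>)))"
    then obtain e where "{Inr w, Inl w} = Inl ` e" unfolding pel_map by auto
    then show False using new_not_img[of w e] by (simp add: insert_commute)
  qed
  ultimately have "is_path (V' \<union> A') E' (Inr w # Inl w # map Inl r)"
    using p1 r unfolding is_path_Cons2 by simp
  then have pp: "is_path (V' \<union> A') E' (Inr w # map Inl (g w \<alpha>))" using r by simp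
  have ll: "last (Inr w # map Inl (g w \<alpha>)) = Inl \<alpha>" using gp by (simp add: last_map)
  show ?thesis by (rule gamma_eqI[OF pp _ ll]) (simp, rule unique2)
qed

end


context dpr begin

definition loc' where "loc' P y' = (\<Prod>e'\<in>{e'\<in>E'. y' \<in> e' \<and> e' \<notin> P}. q' e' y')"

lemma q'_img: "q' (Inl ` e) (Inl y) = q e y"
proof -
  have "Inr y \<notin> (Inl ` e :: ('c + 'c) set)" by blast
  moreover have "Inl -` (Inl ` e :: ('c + 'c) set) = e" by (simp add: inj_vimage_image_eq)
  ultimately show ?thesis unfolding TX_q_def by simp
qed

lemma q'_new: "q' {Inl y, Inr y} (Inl y) = hb y"
  unfolding TX_q_def by (simp add: bval_hb)

lemma PE_mapInl: "path_edges (map Inl p) = (\<lambda>e. Inl ` e) ` path_edges p"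
  unfolding path_edges_def pel_map by simp

lemma hbBn: "y \<in> S \<union> X \<Longrightarrow> (if y \<in> Bn then hb y else 1) = hb y"
  using hb_X bval_hb by auto

lemma loc'_gen:
  assumes y: "y \<in> S \<union> X" and N: "N \<subseteq> (\<lambda>v. {Inl v, Inr v}) ` Bn"
  shows "loc' ((\<lambda>e. Inl ` e) ` P \<union> N) (Inl y) = locS P y * (if y \<in> Bn \<and> {Inl y, Inr y} \<notin> N then hb y else 1)"
proof -
  let ?I = "(\<lambda>e. Inl ` e) ` {e\<in>E. y \<in> e \<and> e \<notin> P \<and> e \<in> SE} :: ('c + 'c) set set"
  let ?J = "(if y \<in> Bn \<and> {Inl y, Inr y} \<notin> N then {{Inl y, Inr y}} else {}) :: ('c + 'c) set set"
  have Nnew: "\<And>e. Inl ` e \<notin> N" using N new_not_img by blast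
  have eq: "{e'\<in>E'. Inl y \<in> e' \<and> e' \<notin> (\<lambda>e. Inl ` e) ` P \<union> N} = ?I \<union> ?J"
  proof
    show "{e'\<in>E'. Inl y \<in> e' \<and> e' \<notin> (\<lambda>e. Inl ` e) ` P \<union> N} \<subseteq> ?I \<union> ?J"
    proof
      fix e' assume e': "e' \<in> {e'\<in>E'. Inl y \<in> e' \<and> e' \<notin> (\<lambda>e. Inl ` e) ` P \<union> N}"
      then have e'E: "e' \<in> E'" and yi: "Inl y \<in> e'" and nP: "e' \<notin> (\<lambda>e. Inl ` e) ` P" and nN: "e' \<notin> N" by auto
      from e'E show "e' \<in> ?I \<union> ?J"
      proof (cases rule: E'_cases)
        case (img e)
        have "y \<in> e" using yi img by blast
        moreover have "e \<notin> P" using nP img by blast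
        moreover have "e \<in> E" using img SE_E by blast
        ultimately show ?thesis using img by blast
      next
        case (new v)
        then have "v = y" using yi by blast
        then show ?thesis using new nN by simp
      qed
    qed
    show "?I \<union> ?J \<subseteq> {e'\<in>E'. Inl y \<in> e' \<and> e' \<notin> (\<lambda>e. Inl ` e) ` P \<union> N}"
    proof
      fix e' assume "e' \<in> ?I \<union> ?J"
      then show "e' \<in> {e'\<in>E'. Inl y \<in> e' \<and> e' \<notin> (\<lambda>e. Inl ` e) ` P \<union> N}"
      proof
        assume "e' \<in> ?I"
        then obtain e where e: "e \<in> {e\<in>E. y \<in> e \<and> e \<notin> P \<and> e \<in> SE}" "e' = Inl ` e" by (rule imageE)
        have 1: "Inl ` e \<in> E'" using e(1) E'_Inl by blast
        have 2: "Inl y \<in> (Inl ` e :: ('c + 'c) set)" using e(1) by blast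
        have 3: "(Inl ` e :: ('c + 'c) set) \<notin> (\<lambda>e. Inl ` e) ` P"
        proof
          assume "(Inl ` e :: ('c + 'c) set) \<in> (\<lambda>e. Inl ` e) ` P"
          then obtain e0 where "e0 \<in> P" "Inl ` e = (Inl ` e0 :: ('c + 'c) set)" by auto
          then have "e = e0" by (simp add: inj_image_eq_iff)
          then show False using e(1) \<open>e0 \<in> P\<close> by blast
        qed
        have 4: "Inl ` e \<notin> N" by (rule Nnew)
        have 5: "(Inl ` e :: ('c + 'c) set) \<notin> (\<lambda>e. Inl ` e) ` P \<union> N" using 3 4 by blast
        have "(Inl ` e :: ('c + 'c) set) \<in> {e'\<in>E'. Inl y \<in> e' \<and> e' \<notin> (\<lambda>e. Inl ` e) ` P \<union> N}"
          using 1 2 5 by (intro CollectI conjI)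
        then show ?thesis unfolding e(2) .
      next
        assume j: "e' \<in> ?J"
        have yB: "y \<in> Bn" and nN: "{Inl y, Inr y} \<notin> N" and ee: "e' = {Inl y, Inr y}"
        proof -
          have c: "y \<in> Bn \<and> {Inl y, Inr y} \<notin> N"
          proof (rule ccontr)
            assume "\<not> (y \<in> Bn \<and> {Inl y, Inr y} \<notin> N)"
            then have "?J = {}" by (simp only: if_False simp_thms)
            then show False using j by blast
          qed
          then have "?J = {{Inl y, Inr y}}" by (simp only: if_True simp_thms)
          then show "e' = {Inl y, Inr y}" using j by blast
          show "y \<in> Bn" using c by blast
          show "{Inl y, Inr y} \<notin> N" using c by blast
        qed
        have 1: "{Inl y, Inr y} \<in> E'" unfolding E'_def using yB by blast
        have 2: "{Inl y, Inr y} \<notin> (\<lambda>e. Inl ` e) ` P" using new_not_img by blast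
        have 3: "{Inl y, Inr y} \<notin> (\<lambda>e. Inl ` e) ` P \<union> N" using 2 nN by blast
        have "{Inl y, Inr y} \<in> {e'\<in>E'. Inl y \<in> e' \<and> e' \<notin> (\<lambda>e. Inl ` e) ` P \<union> N}"
          using 1 3 by (intro CollectI conjI) simp_all
        then show ?thesis unfolding ee .
      qed
    qed
  qed
  have disj: "?I \<inter> ?J = {}"
  proof -
    have "{Inl y, Inr y} \<notin> ?I" using new_not_img by blast
    then show ?thesis by simp
  qed
  have finI: "finite ?I" using finX1 by simp
  have "loc' ((\<lambda>e. Inl ` e) ` P \<union> N) (Inl y) = (\<Prod>e'\<in>?I. q' e' (Inl y)) * (\<Prod>e'\<in>?J. q' e' (Inl y))"
    unfolding loc'_def eq by (rule prod.union_disjoint[OF finI _ disj]) simp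
  also have "(\<Prod>e'\<in>?I. q' e' (Inl y)) = (\<Prod>e\<in>{e\<in>E. y \<in> e \<and> e \<notin> P \<and> e \<in> SE}. q' (Inl ` e) (Inl y))"
    by (subst prod.reindex[OF inj_imInl]) (simp add: o_def)
  also have "\<dots> = locS P y" unfolding locS_def q'_img ..
  also have "(\<Prod>e'\<in>?J. q' e' (Inl y)) = (if y \<in> Bn \<and> {Inl y, Inr y} \<notin> N then hb y else 1)"
    using q'_new by simp
  finally show ?thesis .
qed

lemma loc'_Inr:
  assumes w: "w \<in> Bn"
  shows "loc' (insert {Inr w, Inl w} Q) (Inr w) = 1"
proof -
  have "\<And>e'. e' \<in> E' \<Longrightarrow> Inr w \<in> e' \<Longrightarrow> e' = {Inr w, Inl w}"
    using Inr_edge by (simp add: insert_commute)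
  then have eq: "{e'\<in>E'. Inr w \<in> e' \<and> e' \<notin> insert {Inr w, Inl w} Q} = {}" by blast
  show ?thesis unfolding loc'_def eq by simp
qed

lemma nochord1:
  assumes w: "w \<in> S \<union> X" and a: "\<alpha> \<in> X"
  shows "\<forall>e'\<in>E'. e' \<subseteq> set (map Inl (g w \<alpha>)) \<longrightarrow> e' \<in> path_edges (map Inl (g w \<alpha>))"
proof (intro ballI impI)
  fix e' assume e': "e' \<in> E'" and sub: "e' \<subseteq> set (map Inl (g w \<alpha>))"
  have w0: "w \<in> V \<union> A" and a0: "\<alpha> \<in> V \<union> A" using w a SX_cells by auto
  from e' show "e' \<in> path_edges (map Inl (g w \<alpha>))"
  proof (cases rule: E'_cases)
    case (img e)
    then have "e \<subseteq> set (g w \<alpha>)" using sub by (auto simp: inj_image_subset_iff)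
    then have "e \<in> path_edges (g w \<alpha>)" using nochord[OF w0 a0] img SE_E unfolding path_edges_def by blast
    then show ?thesis unfolding PE_mapInl using img by blast
  next
    case (new v)
    then have "Inr v \<in> set (map Inl (g w \<alpha>))" using sub by blast
    then show ?thesis by auto
  qed
qed

lemma PE_Inr:
  assumes w: "w \<in> S \<union> X" and a: "\<alpha> \<in> X"
  shows "path_edges (Inr w # map Inl (g w \<alpha>)) = insert {Inr w, Inl w} (path_edges (map Inl (g w \<alpha>)))"
proof -
  have w0: "w \<in> V \<union> A" and a0: "\<alpha> \<in> V \<union> A" using w a SX_cells by auto
  have "g w \<alpha> = w # tl (g w \<alpha>)" using gamma_hd_Cons[OF w0 a0] .
  then have m: "map Inl (g w \<alpha>) = Inl w # map Inl (tl (g w \<alpha>))" by (metis list.map(2))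
  show ?thesis unfolding path_edges_def m by simp
qed

lemma nochord2:
  assumes w: "w \<in> Bn" and a: "\<alpha> \<in> X"
  shows "\<forall>e'\<in>E'. e' \<subseteq> set (Inr w # map Inl (g w \<alpha>)) \<longrightarrow> e' \<in> path_edges (Inr w # map Inl (g w \<alpha>))"
proof (intro ballI impI)
  fix e' assume e': "e' \<in> E'" and sub: "e' \<subseteq> set (Inr w # map Inl (g w \<alpha>))"
  have wS: "w \<in> S \<union> X" using w by blast
  from e' show "e' \<in> path_edges (Inr w # map Inl (g w \<alpha>))"
  proof (cases rule: E'_cases)
    case (img e)
    have "Inr w \<notin> e'" using img by blast
    then have "e' \<subseteq> set (map Inl (g w \<alpha>))" using sub by auto
    then have "e' \<in> path_edges (map Inl (g w \<alpha>))" using nochord1[OF wS a] e' by blast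
    then show ?thesis unfolding PE_Inr[OF wS a] by blast
  next
    case (new v)
    then have "Inr v \<in> set (Inr w # map Inl (g w \<alpha>))" using sub by blast
    then have "v = w" by auto
    then show ?thesis unfolding PE_Inr[OF wS a] using new by (simp add: insert_commute)
  qed
qed

lemma xcoef'_Inl:
  assumes w: "w \<in> S" and a: "\<alpha> \<in> X"
  shows "xcoef V' A' E' f' q' (Inl w) (Inl \<alpha>) = xcoef V A E f q w \<alpha>"
proof -
  have wS: "w \<in> S \<union> X" using w by blast
  have w0: "w \<in> V \<union> A" and a0: "\<alpha> \<in> V \<union> A" using wS a SX_cells by auto
  have c2: "\<forall>e\<in>E'. card e = 2" using card2' by blast
  let ?P = "path_edges (g w \<alpha>)"
  have "xcoef V' A' E' f' q' (Inl w) (Inl \<alpha>) = f \<alpha> * (\<Prod>y'\<in>set (map Inl (g w \<alpha>)). loc' (path_edges (map Inl (g w \<alpha>))) y')"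
    unfolding xcoef_def gamma'_Inl[OF wS a] incident_prod[OF finE' c2 nochord1[OF wS a]] loc'_def
    by (simp add: TX_f_def)
  also have "(\<Prod>y'\<in>set (map Inl (g w \<alpha>)). loc' (path_edges (map Inl (g w \<alpha>))) y')
      = (\<Prod>y\<in>set (g w \<alpha>). loc' (path_edges (map Inl (g w \<alpha>))) (Inl y))"
    by (simp add: prod.reindex)
  also have "\<dots> = (\<Prod>y\<in>set (g w \<alpha>). loc ?P y)"
  proof (rule prod.cong[OF refl])
    fix y assume y: "y \<in> set (g w \<alpha>)"
    have yS: "y \<in> S \<union> X" using convex[OF wS] a y by blast
    have "loc' (path_edges (map Inl (g w \<alpha>))) (Inl y) = loc' ((\<lambda>e. Inl ` e) ` ?P \<union> {}) (Inl y)"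
      unfolding PE_mapInl by simp
    also have "\<dots> = locS ?P y * hb y" using loc'_gen[OF yS, of "{}" ?P] hbBn[OF yS] by simp
    also have "\<dots> = loc ?P y" using loc_split[OF PE_SE[OF wS a]] by simp
    finally show "loc' (path_edges (map Inl (g w \<alpha>))) (Inl y) = loc ?P y" .
  qed
  finally show ?thesis using xcoef_loc[OF w0 a0] by simp
qed

lemma xcoef'_Inr:
  assumes w: "w \<in> Bn" and a: "\<alpha> \<in> X"
  shows "xcoef V' A' E' f' q' (Inr w) (Inl \<alpha>) = locS (path_edges (g w \<alpha>)) w * R \<alpha> w"
proof -
  have wS: "w \<in> S \<union> X" using w by blast
  have w0: "w \<in> V \<union> A" and a0: "\<alpha> \<in> V \<union> A" using wS a SX_cells by auto
  have c2: "\<forall>e\<in>E'. card e = 2" using card2' by blast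
  let ?P = "path_edges (g w \<alpha>)"
  let ?Q = "path_edges (Inr w # map Inl (g w \<alpha>))"
  have Q: "?Q = (\<lambda>e. Inl ` e) ` ?P \<union> {{Inl w, Inr w}}"
    unfolding PE_Inr[OF wS a] PE_mapInl by (auto simp: insert_commute)
  have N: "{{Inl w, Inr w}} \<subseteq> (\<lambda>v. {Inl v, Inr v}) ` Bn" using w by blast
  have nI: "Inr w \<notin> set (map Inl (g w \<alpha>))" by auto
  have "xcoef V' A' E' f' q' (Inr w) (Inl \<alpha>) = f \<alpha> * (\<Prod>y'\<in>set (Inr w # map Inl (g w \<alpha>)). loc' ?Q y')"
    unfolding xcoef_def gamma'_Inr[OF w a] incident_prod[OF finE' c2 nochord2[OF w a]] loc'_def
    by (simp add: TX_f_def)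
  also have "(\<Prod>y'\<in>set (Inr w # map Inl (g w \<alpha>)). loc' ?Q y') = loc' ?Q (Inr w) * (\<Prod>y'\<in>set (map Inl (g w \<alpha>)). loc' ?Q y')"
    using prod.insert[OF finite_set nI, of "loc' ?Q"] by simp
  also have "loc' ?Q (Inr w) = 1" unfolding PE_Inr[OF wS a] by (rule loc'_Inr[OF w])
  also have "(\<Prod>y'\<in>set (map Inl (g w \<alpha>)). loc' ?Q y') = (\<Prod>y\<in>set (g w \<alpha>). loc' ?Q (Inl y))"
    by (simp add: prod.reindex)
  also have "\<dots> = (\<Prod>y\<in>set (g w \<alpha>). locS ?P y * (if y \<noteq> w then hb y else 1))"
  proof (rule prod.cong[OF refl])
    fix y assume y: "y \<in> set (g w \<alpha>)"
    have yS: "y \<in> S \<union> X" using convex[OF wS] a y by blast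
    have "loc' ?Q (Inl y) = locS ?P y * (if y \<in> Bn \<and> {Inl y, Inr y} \<notin> {{Inl w, Inr w}} then hb y else 1)"
      unfolding Q by (rule loc'_gen[OF yS N])
    also have "(if y \<in> Bn \<and> {Inl y, Inr y} \<notin> {{Inl w, Inr w}} then hb y else 1) = (if y \<noteq> w then hb y else 1)"
      using hbBn[OF yS] by (auto simp: doubleton_eq_iff)
    finally show "loc' ?Q (Inl y) = locS ?P y * (if y \<noteq> w then hb y else 1)" .
  qed
  also have "\<dots> = locS ?P w * (\<Prod>y\<in>set (g w \<alpha>) - {w}. locS ?P y * (if y \<noteq> w then hb y else 1))"
    using prod.remove[OF finite_set w_in_path[OF w0 a0], of "\<lambda>y. locS ?P y * (if y \<noteq> w then hb y else 1)"] by simp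
  also have "(\<Prod>y\<in>set (g w \<alpha>) - {w}. locS ?P y * (if y \<noteq> w then hb y else 1)) = (\<Prod>y\<in>set (g w \<alpha>) - {w}. loc ?P y)"
    using loc_split[OF PE_SE[OF wS a]] by (intro prod.cong) auto
  finally show ?thesis unfolding R_def by (simp add: algebra_simps)
qed

end


context dpr begin

lemma MT: "Minv V A E f q = - (\<Sum>\<alpha>\<in>X. TT \<alpha>)"
proof -
  have "Minv V A E f q = - (\<Sum>v\<in>V \<union> A0 A f. \<Sum>\<alpha>\<in>X. xcoef V A E f q v \<alpha> * (int (valency E v) - 2))"
    unfolding Minv_def Ncoef_def by (simp add: sum_distrib_right)
  also have "(\<Sum>v\<in>V \<union> A0 A f. \<Sum>\<alpha>\<in>X. xcoef V A E f q v \<alpha> * (int (valency E v) - 2))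
     = (\<Sum>\<alpha>\<in>X. \<Sum>v\<in>V \<union> A0 A f. xcoef V A E f q v \<alpha> * (int (valency E v) - 2))"
    by (rule sum.swap)
  finally show ?thesis unfolding TT_def .
qed

definition TXT where "TXT \<alpha> =
  (\<Sum>w\<in>S. xcoef V' A' E' f' q' (Inl w) (Inl \<alpha>) * (int (valency E' (Inl w)) - 2))
  + (\<Sum>w\<in>Bn. xcoef V' A' E' f' q' (Inr w) (Inl \<alpha>) * (int (valency E' (Inr w)) - 2))"

lemma MTX: "Minv V' A' E' f' q' = - (\<Sum>\<alpha>\<in>X. TXT \<alpha>)"
proof -
  have N: "Ncoef V' A' E' f' q' v' = (\<Sum>\<alpha>\<in>X. xcoef V' A' E' f' q' v' (Inl \<alpha>))" for v'
    unfolding Ncoef_def AX' by (simp add: sum.reindex)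
  have "Minv V' A' E' f' q' = - (\<Sum>v'\<in>Inl ` S \<union> Inr ` Bn. \<Sum>\<alpha>\<in>X. xcoef V' A' E' f' q' v' (Inl \<alpha>) * (int (valency E' v') - 2))"
    unfolding Minv_def VA0' N by (simp add: sum_distrib_right)
  also have "(\<Sum>v'\<in>Inl ` S \<union> Inr ` Bn. \<Sum>\<alpha>\<in>X. xcoef V' A' E' f' q' v' (Inl \<alpha>) * (int (valency E' v') - 2))
     = (\<Sum>\<alpha>\<in>X. \<Sum>v'\<in>Inl ` S \<union> Inr ` Bn. xcoef V' A' E' f' q' v' (Inl \<alpha>) * (int (valency E' v') - 2))"
    by (rule sum.swap)
  also have "\<dots> = (\<Sum>\<alpha>\<in>X. TXT \<alpha>)"
  proof (rule sum.cong[OF refl])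
    fix \<alpha>
    let ?h = "\<lambda>v'. xcoef V' A' E' f' q' v' (Inl \<alpha>) * (int (valency E' v') - 2)"
    have "(\<Sum>v'\<in>Inl ` S \<union> Inr ` Bn. ?h v') = (\<Sum>v'\<in>Inl ` S. ?h v') + (\<Sum>v'\<in>Inr ` Bn. ?h v')"
      by (rule sum.union_disjoint) (use finS finBn in auto)
    also have "(\<Sum>v'\<in>Inl ` S. ?h v') = (\<Sum>w\<in>S. ?h (Inl w))" by (simp add: sum.reindex)
    also have "(\<Sum>v'\<in>Inr ` Bn. ?h v') = (\<Sum>w\<in>Bn. ?h (Inr w))" by (simp add: sum.reindex)
    finally show "(\<Sum>v'\<in>Inl ` S \<union> Inr ` Bn. ?h v') = TXT \<alpha>" unfolding TXT_def .
  qed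
  finally show ?thesis .
qed

lemma TT_TXT:
  assumes a: "\<alpha> \<in> X" shows "TT \<alpha> = TXT \<alpha>"
proof -
  let ?L = "\<lambda>w. locS (path_edges (g w \<alpha>)) w * R \<alpha> w"
  have "TXT \<alpha> = (\<Sum>w\<in>S. ?L w * hb w * (int (card {e\<in>SE. w \<in> e}) + (if w \<in> Bn then 1 else 0) - 2))
      + (\<Sum>w\<in>Bn. ?L w * (1 - 2))"
    unfolding TXT_def
    using xcoef'_Inl[OF _ a] I1[OF _ a] val_Inl xcoef'_Inr[OF _ a] val_Inr
    by (intro arg_cong2[where f = "(+)"] sum.cong) auto
  also have "(\<Sum>w\<in>Bn. ?L w * (1 - 2)) = (\<Sum>w\<in>S. if w \<in> Bn then - ?L w else 0)"
    using sum.inter_filter[OF finS, of "\<lambda>w. - ?L w" "\<lambda>w. bval V A E q v0 X w \<noteq> 1"] by simp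
  also have "(\<Sum>w\<in>S. ?L w * hb w * (int (card {e\<in>SE. w \<in> e}) + (if w \<in> Bn then 1 else 0) - 2))
      + (\<Sum>w\<in>S. if w \<in> Bn then - ?L w else 0)
      = (\<Sum>w\<in>S. ?L w * (hb w * (int (valency E w) - 2) - ((int (card (Hs w)) - 1) * hb w + 1)))"
    unfolding sum.distrib[symmetric]
  proof (rule sum.cong[OF refl])
    fix w assume w: "w \<in> S"
    have v: "int (valency E w) = int (card {e\<in>SE. w \<in> e}) + int (card (Hs w))"
      using val_T SV w by auto
    show "?L w * hb w * (int (card {e\<in>SE. w \<in> e}) + (if w \<in> Bn then 1 else 0) - 2) + (if w \<in> Bn then - ?L w else 0)
      = ?L w * (hb w * (int (valency E w) - 2) - ((int (card (Hs w)) - 1) * hb w + 1))"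
    proof (cases "hb w = 1")
      case True
      then have nb: "w \<notin> Bn" using bval_hb by simp
      show ?thesis unfolding v if_not_P[OF nb] using True by (simp add: algebra_simps)
    next
      case False
      then have nb: "w \<in> Bn" using bval_hb w by simp
      show ?thesis unfolding v if_P[OF nb] by (simp add: algebra_simps)
    qed
  qed
  finally show ?thesis using TT_formula[OF a] by simp
qed

lemma main: "Minv V A E f q = M_sub V A E f q v0 X"
proof -
  have "M_sub V A E f q v0 X = Minv V' A' E' f' q'" unfolding M_sub_def ..
  also have "\<dots> = - (\<Sum>\<alpha>\<in>X. TXT \<alpha>)" by (rule MTX)
  also have "\<dots> = - (\<Sum>\<alpha>\<in>X. TT \<alpha>)" using TT_TXT by simp
  also have "\<dots> = Minv V A E f q" using MT by simp
  finally show ?thesis by simp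
qed

end

theorem lemma4p7:
  fixes V A :: "'c set" and E :: "'c set set" and f :: "'c \<Rightarrow> int"
    and q :: "'c set \<Rightarrow> 'c \<Rightarrow> int" and v0 :: 'c
  assumes "decorated_pseudo_rooted_tree V A E f q v0"
    and "A - A0 A f \<noteq> {}"
  shows "Minv V A E f q = M_sub V A E f q v0 (A - A0 A f)
     \<and> (\<forall>\<alpha>. A - A0 A f = {\<alpha>} \<longrightarrow> Minv V A E f q = M_sub V A E f q v0 {\<alpha>})"
proof -
  interpret dpr V A E f q v0 using assms by unfold_locales
  have m: "Minv V A E f q = M_sub V A E f q v0 (A - A0 A f)" by (rule main)
  show ?thesis
  proof
    show "Minv V A E f q = M_sub V A E f q v0 (A - A0 A f)" by (rule m)
    show "\<forall>\<alpha>. A - A0 A f = {\<alpha>} \<longrightarrow> Minv V A E f q = M_sub V A E f q v0 {\<alpha>}"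
      using m by auto
  qed
qed

end
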